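(* Let $\alpha\in[0,1)$ and $\delta,\epsilon\in(0,\infty)$. There exists $C_{\alpha,\delta,\epsilon}(T)\in(0,\infty)$ such that for all $M\in\mathbb N$, all $x\in H_M$, all $h\in H_M\setminus\{0\}$ and all $0\le s<t\le T$, almost surely, \[\frac{\|\Pi_M(t,s)h\|_{L^2}}{\|(-A)^{-\alpha}h\|_{L^2}}\le\frac{C_{\alpha,\delta,\epsilon}(T)}{(t-s)^\alpha}\exp\Bigl(\epsilon\int_s^t\|\nabla X_M^x(r)\|_{L^2}^2dr\Bigr)\Bigl(\sup_{r\in[s,t]}\|(-A)^{\frac14+\delta}X_M^x(r)\|_{L^2}^2+1\Bigr).\]
   Context: $T\in(0,\infty)$ fixed. $L^2=L^2(0,1)$ (real); $\nabla$ is the derivative on $(0,1)$. With $h_k=\sqrt2\sin(k\pi\cdot)$, $A$ is the Dirichlet Laplacian $Ax=-\sum_k(\pi k)^2\langle x,h_k\rangle_{L^2}h_k$ and for real $\alpha$, $(-A)^{\alpha}x=\sum_k(\pi k)^{2\alpha}\langle x,h_k\rangle_{L^2}h_k$. $H_M=\mathrm{span}(h_1,\dots,h_M)$, $P_M$ the orthogonal projection onto $H_M$. $B[x_1,x_2]=x_1\nabla x_2+x_2\nabla x_1$, $B_M[x_1,x_2]=P_MB[P_Mx_1,P_Mx_2]$, $B_M(x)=B_M[x,x]$. $Q$ is a positive self-adjoint trace-class operator on $L^2$ with eigenbasis $(e_k)$, eigenvalues $(q_k)$; $W^Q(t)=\sum_k\sqrt{q_k}W^{(k)}(t)e_k$ with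 independent standard Brownian motions $W^{(k)}$. For $x\in H_M$, $X_M^x$ is the unique $H_M$-valued continuous adapted process with $X_M^x(t)=x+\int_0^t[AX_M^x(r)+B_M(X_M^x(r))]dr+P_MW^Q(t)$. For $s\ge0$ and $h\in H_M$, $\eta_M^h(\cdot|s)$ is the (pathwise) solution on $[s,\infty)$ of $\frac{d}{dt}\eta_M^h(t|s)=A\eta_M^h(t|s)+2B_M[X_M^x(t),\eta_M^h(t|s)]$, $\eta_M^h(s|s)=h$, and $\Pi_M(t,s)h=\eta_M^h(t|s)$. *)

theory Defs
  imports "HOL-Probability.Probability"
begin

text \<open>Real L^2(0,1): elements are represented by functions real => real;
 inner product and norm are the Lebesgue/Henstock integrals over [0,1].\<close>

definition L2fun :: "(real \<Rightarrow> real) \<Rightarrow> bool" where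
  "L2fun f \<longleftrightarrow> f measurable_on {0..1} \<and> (\<lambda>y. (f y)^2) integrable_on {0..1}"

definition L2inner :: "(real \<Rightarrow> real) \<Rightarrow> (real \<Rightarrow> real) \<Rightarrow> real" where
  "L2inner f g = integral {0..1} (\<lambda>y. f y * g y)"

definition L2norm :: "(real \<Rightarrow> real) \<Rightarrow> real" where
  "L2norm f = sqrt (L2inner f f)"

text \<open>Sine basis h_k = sqrt 2 sin(k pi .), k >= 1 (h_0 = 0 is never used as a basis vector).\<close>

definition hb :: "nat \<Rightarrow> real \<Rightarrow> real" where
  "hb k y = sqrt 2 * sin (real k * pi * y)"

definition HM :: "nat \<Rightarrow> (real \<Rightarrow> real) set" where
  "HM M = {f. \<exists>c::nat \<Rightarrow> real. f = (\<lambda>y. \<Sum>k\<in>{1..M}. c k * hb k y)}"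

definition PM :: "nat \<Rightarrow> (real \<Rightarrow> real) \<Rightarrow> (real \<Rightarrow> real)" where
  "PM M f = (\<lambda>y. \<Sum>k\<in>{1..M}. L2inner f (hb k) * hb k y)"

definition Adir :: "(real \<Rightarrow> real) \<Rightarrow> (real \<Rightarrow> real)" where
  "Adir f = (\<lambda>y. - (\<Sum>k. (pi * real k)^2 * L2inner f (hb k) * hb k y))"

definition fracA :: "real \<Rightarrow> (real \<Rightarrow> real) \<Rightarrow> (real \<Rightarrow> real)" where
  "fracA a f = (\<lambda>y. \<Sum>k. (pi * real k) powr (2 * a) * L2inner f (hb k) * hb k y)"

definition grad :: "(real \<Rightarrow> real) \<Rightarrow> (real \<Rightarrow> real)" where
  "grad f = (\<lambda>y. deriv f y)"

definition Bnl :: "(real \<Rightarrow> real) \<Rightarrow> (real \<Rightarrow> real) \<Rightarrow> (real \<Rightarrow> real)" where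
  "Bnl x1 x2 = (\<lambda>y. x1 y * grad x2 y + x2 y * grad x1 y)"

definition BM :: "nat \<Rightarrow> (real \<Rightarrow> real) \<Rightarrow> (real \<Rightarrow> real) \<Rightarrow> (real \<Rightarrow> real)" where
  "BM M x1 x2 = PM M (Bnl (PM M x1) (PM M x2))"

definition indep_std_BMs :: "'w measure \<Rightarrow> (nat \<Rightarrow> real \<Rightarrow> 'w \<Rightarrow> real) \<Rightarrow> bool" where
  "indep_std_BMs P W \<longleftrightarrow> prob_space P \<and>
    (\<forall>k t. W k t \<in> borel_measurable P) \<and>
    (\<forall>k. AE \<omega> in P. W k 0 \<omega> = 0 \<and> continuous_on {0..} (\<lambda>t. W k t \<omega>)) \<and>
    (\<forall>k s t. 0 \<le> s \<and> s < t \<longrightarrow>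
        distributed P lborel (\<lambda>\<omega>. W k t \<omega> - W k s \<omega>)
          (\<lambda>z. ennreal (normal_density 0 (sqrt (t - s)) z))) \<and>
    (\<forall>k n (\<tau>::nat \<Rightarrow> real). 0 \<le> \<tau> 0 \<and> (\<forall>i<n. \<tau> i < \<tau> (Suc i)) \<longrightarrow>
        prob_space.indep_vars P (\<lambda>_. borel) (\<lambda>i \<omega>. W k (\<tau> (Suc i)) \<omega> - W k (\<tau> i) \<omega>) {..<n}) \<and>
    prob_space.indep_vars P (\<lambda>_. PiM UNIV (\<lambda>_::real. borel)) (\<lambda>k \<omega>. (\<lambda>t. W k t \<omega>)) UNIV"

text \<open>Q positive self-adjoint trace class, given by orthonormal eigenbasis e and eigenvalues q.\<close>

definition trace_class_eigen :: "(nat \<Rightarrow> real \<Rightarrow> real) \<Rightarrow> (nat \<Rightarrow> real) \<Rightarrow> bool" where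
  "trace_class_eigen e q \<longleftrightarrow>
    (\<forall>k. L2fun (e k)) \<and>
    (\<forall>j k. L2inner (e j) (e k) = (if j = k then 1 else 0)) \<and>
    (\<forall>f. L2fun f \<and> (\<forall>k. L2inner f (e k) = 0) \<longrightarrow> L2inner f f = 0) \<and>
    (\<forall>k. 0 \<le> q k) \<and> summable q"

definition PMWQ :: "nat \<Rightarrow> (nat \<Rightarrow> real \<Rightarrow> real) \<Rightarrow> (nat \<Rightarrow> real) \<Rightarrow> (nat \<Rightarrow> real \<Rightarrow> 'w \<Rightarrow> real)
    \<Rightarrow> real \<Rightarrow> 'w \<Rightarrow> (real \<Rightarrow> real)" where
  "PMWQ M e q W t \<omega> = (\<lambda>y. \<Sum>k. sqrt (q k) * W k t \<omega> * PM M (e k) y)"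

text \<open>Continuity of an H_M-valued path (H_M finite dimensional: continuity of the coordinates).\<close>

definition HM_path_cont :: "nat \<Rightarrow> real set \<Rightarrow> (real \<Rightarrow> real \<Rightarrow> real) \<Rightarrow> bool" where
  "HM_path_cont M S Y \<longleftrightarrow> (\<forall>t\<in>S. Y t \<in> HM M) \<and>
     (\<forall>k\<in>{1..M}. continuous_on S (\<lambda>t. L2inner (Y t) (hb k)))"

definition galerkin_solution :: "nat \<Rightarrow> (nat \<Rightarrow> real \<Rightarrow> real) \<Rightarrow> (nat \<Rightarrow> real) \<Rightarrow>
    (nat \<Rightarrow> real \<Rightarrow> 'w \<Rightarrow> real) \<Rightarrow> (real \<Rightarrow> real) \<Rightarrow> (real \<Rightarrow> 'w \<Rightarrow> (real \<Rightarrow> real)) \<Rightarrow> 'w \<Rightarrow> bool" where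
  "galerkin_solution M e q W x X \<omega> \<longleftrightarrow>
     HM_path_cont M {0..} (\<lambda>t. X t \<omega>) \<and>
     (\<forall>t\<ge>0. X t \<omega> = (\<lambda>y. x y
        + integral {0..t} (\<lambda>r. Adir (X r \<omega>) y + BM M (X r \<omega>) (X r \<omega>) y)
        + PMWQ M e q W t \<omega> y))"

definition linearized_solution :: "nat \<Rightarrow> (real \<Rightarrow> (real \<Rightarrow> real)) \<Rightarrow> real \<Rightarrow> (real \<Rightarrow> real)
    \<Rightarrow> (real \<Rightarrow> (real \<Rightarrow> real)) \<Rightarrow> bool" where
  "linearized_solution M Xp s h \<eta> \<longleftrightarrow>
     HM_path_cont M {s..} \<eta> \<and> \<eta> s = h \<and>
     (\<forall>t\<ge>s. \<forall>k\<in>{1..M}.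
        ((\<lambda>\<tau>. L2inner (\<eta> \<tau>) (hb k)) has_real_derivative
           L2inner (\<lambda>y. Adir (\<eta> t) y + 2 * BM M (Xp t) (\<eta> t) y) (hb k)) (at t within {s..}))"

end

theory Submission
  imports Defs
begin


lemma cos_int_has_integral:
  fixes m :: int assumes "m \<noteq> 0"
  shows "((\<lambda>y. cos (real_of_int m * pi * y)) has_integral 0) {0..1}"
proof -
  have d: "((\<lambda>y. sin (real_of_int m * pi * y) / (real_of_int m * pi)) has_vector_derivative
      cos (real_of_int m * pi * y)) (at y within {0..1})" for y
    using assms
    by (auto intro!: derivative_eq_intros simp: has_real_derivative_iff_has_vector_derivative[symmetric])
  have "((\<lambda>y. cos (real_of_int m * pi * y)) has_integral
     (sin (real_of_int m * pi * 1) / (real_of_int m * pi) - sin (real_of_int m * pi * 0) / (real_of_int m * pi))) {0..1}"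
    by (rule fundamental_theorem_of_calculus) (auto intro: d)
  moreover have "sin (real_of_int m * pi) = 0"
    by (metis sin_zero_iff_int2 Ints_of_int)
  ultimately show ?thesis by simp
qed

lemma cos_int0_has_integral:
  fixes m :: int
  shows "((\<lambda>y. cos (real_of_int m * pi * y)) has_integral (if m = 0 then 1 else 0)) {0..1}"
  using cos_int_has_integral[of m] has_integral_const_real[of "1::real" 0 1] by (cases "m = 0") auto

definition hc :: "nat \<Rightarrow> real \<Rightarrow> real" where
  "hc k y = sqrt 2 * cos (real k * pi * y)"

definition lam :: "nat \<Rightarrow> real" where
  "lam k = (pi * real k)^2"

lemma hb_prod: "hb j y * hb k y = cos (real_of_int (int j - int k) * pi * y) - cos (real_of_int (int j + int k) * pi * y)"
  unfolding hb_def by (simp add: cos_diff cos_add algebra_simps)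

lemma hc_prod: "hc j y * hc k y = cos (real_of_int (int j - int k) * pi * y) + cos (real_of_int (int j + int k) * pi * y)"
  unfolding hc_def by (simp add: cos_diff cos_add algebra_simps)

lemma hb_orth:
  assumes "j \<ge> 1" "k \<ge> 1"
  shows "((\<lambda>y. hb j y * hb k y) has_integral (if j = k then 1 else 0)) {0..1}"
proof -
  have "((\<lambda>y. cos (real_of_int (int j - int k) * pi * y) - cos (real_of_int (int j + int k) * pi * y))
     has_integral ((if int j - int k = 0 then 1 else 0) - (if int j + int k = 0 then 1 else 0))) {0..1}"
    by (intro has_integral_diff cos_int0_has_integral)
  then show ?thesis using assms by (simp add: hb_prod)
qed

lemma hc_orth:
  assumes "j \<ge> 1" "k \<ge> 1"
  shows "((\<lambda>y. hc j y * hc k y) has_integral (if j = k then 1 else 0)) {0..1}"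
proof -
  have "((\<lambda>y. cos (real_of_int (int j - int k) * pi * y) + cos (real_of_int (int j + int k) * pi * y))
     has_integral ((if int j - int k = 0 then 1 else 0) + (if int j + int k = 0 then 1 else 0))) {0..1}"
    by (intro has_integral_add cos_int0_has_integral)
  then show ?thesis using assms by (simp add: hc_prod)
qed

lemma cont_hb[continuous_intros]: "continuous_on S (hb k)"
  unfolding hb_def by (intro continuous_intros)
lemma cont_hc[continuous_intros]: "continuous_on S (hc k)"
  unfolding hc_def by (intro continuous_intros)

lemma hb_deriv: "(hb k has_real_derivative (real k * pi) * hc k y) (at y within S)"
  unfolding hb_def hc_def
  by (auto intro!: derivative_eq_intros simp: algebra_simps)

lemma hb_0[simp]: "hb 0 = (\<lambda>y. 0)" by (auto simp: hb_def fun_eq_iff)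
lemma hb_ends[simp]: "hb k 0 = 0" "hb k 1 = 0"
  by (auto simp: hb_def sin_zero_iff_int2)
lemma abs_hb: "\<bar>hb k y\<bar> \<le> sqrt 2"
  by (auto simp: hb_def abs_mult)

definition sinsum :: "nat \<Rightarrow> (nat \<Rightarrow> real) \<Rightarrow> real \<Rightarrow> real" where
  "sinsum M c = (\<lambda>y. \<Sum>k\<in>{1..M}. c k * hb k y)"

definition dsinsum :: "nat \<Rightarrow> (nat \<Rightarrow> real) \<Rightarrow> real \<Rightarrow> real" where
  "dsinsum M c = (\<lambda>y. \<Sum>k\<in>{1..M}. c k * (real k * pi) * hc k y)"

lemma cont_sinsum[continuous_intros]: fixes f :: "real \<Rightarrow> real" assumes "continuous_on S f" shows "continuous_on S (\<lambda>x. sinsum M c (f x))"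
  unfolding sinsum_def hb_def by (intro continuous_intros assms)
lemma cont_dsinsum[continuous_intros]: fixes f :: "real \<Rightarrow> real" assumes "continuous_on S f" shows "continuous_on S (\<lambda>x. dsinsum M c (f x))"
  unfolding dsinsum_def hc_def by (intro continuous_intros assms)

lemma sinsum_deriv: "(sinsum M c has_real_derivative dsinsum M c y) (at y within S)"
  unfolding sinsum_def dsinsum_def
  by (auto intro!: derivative_eq_intros DERIV_sum hb_deriv[THEN DERIV_cmult, THEN DERIV_cong] simp: algebra_simps)

lemma sinsum_deriv'[derivative_intros]:
  "(f has_real_derivative f') (at y within S) \<Longrightarrow>
   ((\<lambda>x. sinsum M c (f x)) has_real_derivative dsinsum M c (f y) * f') (at y within S)"
  using DERIV_chain2[OF sinsum_deriv] by blast

lemma grad_sinsum: "grad (sinsum M c) = dsinsum M c"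
  unfolding grad_def using sinsum_deriv[THEN DERIV_imp_deriv, of M c] by auto

lemma sinsum_ends[simp]: "sinsum M c 0 = 0" "sinsum M c 1 = 0"
  by (auto simp: sinsum_def)

lemma HM_iff: "f \<in> HM M \<longleftrightarrow> (\<exists>c. f = sinsum M c)"
  by (auto simp: HM_def sinsum_def)


lemma cont_sinsum0[continuous_intros]: "continuous_on S (sinsum M c)"
  using cont_sinsum[of S "\<lambda>x. x"] by (simp add: continuous_on_id)
lemma cont_dsinsum0[continuous_intros]: "continuous_on S (dsinsum M c)"
  using cont_dsinsum[of S "\<lambda>x. x"] by (simp add: continuous_on_id)

lemma int_sinsum:
  assumes g: "continuous_on {0..1} g"
  shows "((\<lambda>y. sinsum M a y * g y) has_integral (\<Sum>k\<in>{1..M}. a k * integral {0..1} (\<lambda>y. hb k y * g y))) {0..1}"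
proof -
  have "((\<lambda>y. \<Sum>k\<in>{1..M}. a k * (hb k y * g y)) has_integral (\<Sum>k\<in>{1..M}. a k * integral {0..1} (\<lambda>y. hb k y * g y))) {0..1}"
    by (intro has_integral_sum has_integral_mult_right integrable_integral integrable_continuous_interval
        continuous_intros g) auto
  then show ?thesis by (simp add: sinsum_def sum_distrib_right mult.assoc)
qed

lemma int_dsinsum:
  assumes g: "continuous_on {0..1} g"
  shows "((\<lambda>y. dsinsum M a y * g y) has_integral (\<Sum>k\<in>{1..M}. a k * (real k * pi) * integral {0..1} (\<lambda>y. hc k y * g y))) {0..1}"
proof -
  have "((\<lambda>y. \<Sum>k\<in>{1..M}. a k * (real k * pi) * (hc k y * g y)) has_integral (\<Sum>k\<in>{1..M}. a k * (real k * pi) * integral {0..1} (\<lambda>y. hc k y * g y))) {0..1}"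
    by (intro has_integral_sum has_integral_mult_right integrable_integral integrable_continuous_interval
        continuous_intros g) auto
  then show ?thesis by (simp add: dsinsum_def sum_distrib_right mult.assoc)
qed

lemma integral_hb_hb: "integral {0..1} (\<lambda>y. hb j y * hb k y) = (if j = k \<and> k \<ge> 1 then 1 else 0)"
proof (cases "j \<ge> 1 \<and> k \<ge> 1")
  case True then show ?thesis using hb_orth[of j k] by (auto intro: integral_unique)
next
  case False then have "j = 0 \<or> k = 0" by auto
  then show ?thesis by auto
qed

lemma integral_hc_hc: "j \<ge> 1 \<Longrightarrow> k \<ge> 1 \<Longrightarrow> integral {0..1} (\<lambda>y. hc j y * hc k y) = (if j = k then 1 else 0)"
  using hc_orth[of j k] by (auto intro: integral_unique)

lemma sum_delta_1M: fixes M k :: nat shows "(\<Sum>j\<in>{1..M}. a j * (if j = k \<and> k \<ge> 1 then 1 else 0)) = (if k \<in> {1..M} then a k else (0::real))"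
proof -
  have "(\<Sum>j\<in>{1..M}. a j * (if j = k \<and> k \<ge> 1 then 1 else 0)) = (\<Sum>j\<in>{1..M}. if j = k then a j else 0)"
    by (intro sum.cong) auto
  also have "\<dots> = (if k \<in> {1..M} then a k else 0)" by (rule sum.delta) simp
  finally show ?thesis .
qed

lemma coef_sinsum: "L2inner (sinsum M a) (hb k) = (if k \<in> {1..M} then a k else 0)"
proof -
  have "L2inner (sinsum M a) (hb k) = (\<Sum>j\<in>{1..M}. a j * integral {0..1} (\<lambda>y. hb j y * hb k y))"
    unfolding L2inner_def by (rule integral_unique[OF int_sinsum]) (intro continuous_intros)
  also have "\<dots> = (if k \<in> {1..M} then a k else 0)"
    unfolding integral_hb_hb by (rule sum_delta_1M)
  finally show ?thesis .
qed

lemma coef_sinsum'[simp]: "k \<in> {1..M} \<Longrightarrow> L2inner (sinsum M a) (hb k) = a k"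
  by (simp add: coef_sinsum)

lemma sinsum_cong: "(\<And>k. k \<in> {1..M} \<Longrightarrow> a k = b k) \<Longrightarrow> sinsum M a = sinsum M b"
  unfolding sinsum_def by (auto intro!: sum.cong)

lemma HM_repr: "f \<in> HM M \<Longrightarrow> f = sinsum M (\<lambda>k. L2inner f (hb k))"
  by (auto simp: HM_iff intro!: sinsum_cong)

lemma L2inner_sinsum: "L2inner (sinsum M a) (sinsum M b) = (\<Sum>k\<in>{1..M}. a k * b k)"
proof -
  have "L2inner (sinsum M a) (sinsum M b) = (\<Sum>j\<in>{1..M}. a j * integral {0..1} (\<lambda>y. hb j y * sinsum M b y))"
    unfolding L2inner_def by (rule integral_unique[OF int_sinsum]) (intro continuous_intros)
  also have "\<dots> = (\<Sum>j\<in>{1..M}. a j * b j)"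
  proof (intro sum.cong refl)
    fix j assume j: "j \<in> {1..M}"
    have "integral {0..1} (\<lambda>y. hb j y * sinsum M b y) = L2inner (sinsum M b) (hb j)"
      unfolding L2inner_def by (simp add: mult.commute)
    then show "a j * integral {0..1} (\<lambda>y. hb j y * sinsum M b y) = a j * b j" using j by simp
  qed
  finally show ?thesis .
qed

lemma L2norm_sinsum: "L2norm (sinsum M a) = sqrt (\<Sum>k\<in>{1..M}. (a k)^2)"
  unfolding L2norm_def L2inner_sinsum by (simp add: power2_eq_square)

lemma L2inner_dsinsum: "L2inner (dsinsum M a) (dsinsum M b) = (\<Sum>k\<in>{1..M}. lam k * a k * b k)"
proof -
  have "L2inner (dsinsum M a) (dsinsum M b) = (\<Sum>j\<in>{1..M}. a j * (real j * pi) * integral {0..1} (\<lambda>y. hc j y * dsinsum M b y))"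
    unfolding L2inner_def by (rule integral_unique[OF int_dsinsum]) (intro continuous_intros)
  also have "\<dots> = (\<Sum>j\<in>{1..M}. lam j * a j * b j)"
  proof (intro sum.cong refl)
    fix j assume j: "j \<in> {1..M}"
    have "integral {0..1} (\<lambda>y. hc j y * dsinsum M b y) = integral {0..1} (\<lambda>y. dsinsum M b y * hc j y)"
      by (simp add: mult.commute)
    also have "\<dots> = (\<Sum>k\<in>{1..M}. b k * (real k * pi) * integral {0..1} (\<lambda>y. hc k y * hc j y))"
      by (rule integral_unique[OF int_dsinsum]) (intro continuous_intros)
    also have "\<dots> = (\<Sum>k\<in>{1..M}. if k = j then b k * (real k * pi) else 0)"
      using j by (intro sum.cong refl) (simp add: integral_hc_hc)
    also have "\<dots> = b j * (real j * pi)" using j by (subst sum.delta) auto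
    finally show "a j * (real j * pi) * integral {0..1} (\<lambda>y. hc j y * dsinsum M b y) = lam j * a j * b j"
      by (simp add: lam_def power2_eq_square)
  qed
  finally show ?thesis .
qed

lemma L2norm_grad_sq: "(L2norm (grad (sinsum M a)))^2 = (\<Sum>k\<in>{1..M}. lam k * (a k)^2)"
proof -
  have "0 \<le> (\<Sum>k\<in>{1..M}. lam k * (a k)^2)" by (intro sum_nonneg) (auto simp: lam_def)
  then show ?thesis unfolding L2norm_def grad_sinsum L2inner_dsinsum by (simp add: power2_eq_square mult.assoc)
qed

lemma L2norm_sq: "(L2norm (sinsum M a))^2 = (\<Sum>k\<in>{1..M}. (a k)^2)"
  unfolding L2norm_sinsum by (simp add: sum_nonneg)

lemma suminf_sinsum_coef:
  "(\<Sum>k. g k * L2inner (sinsum M a) (hb k) * hb k y) = sinsum M (\<lambda>k. g k * a k) y"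
proof -
  have "(\<Sum>k. g k * L2inner (sinsum M a) (hb k) * hb k y) = (\<Sum>k\<in>{1..M}. g k * L2inner (sinsum M a) (hb k) * hb k y)"
    by (rule suminf_finite) (auto simp: coef_sinsum)
  also have "\<dots> = (\<Sum>k\<in>{1..M}. g k * a k * hb k y)" by (intro sum.cong) auto
  finally show ?thesis by (simp add: sinsum_def)
qed

lemma fracA_sinsum: "fracA b (sinsum M a) = sinsum M (\<lambda>k. (pi * real k) powr (2 * b) * a k)"
  unfolding fracA_def by (simp add: suminf_sinsum_coef)

lemma Adir_sinsum: "Adir (sinsum M a) = sinsum M (\<lambda>k. - lam k * a k)"
proof -
  have "Adir (sinsum M a) = (\<lambda>y. - sinsum M (\<lambda>k. lam k * a k) y)"
    unfolding Adir_def lam_def by (simp add: suminf_sinsum_coef)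
  also have "\<dots> = sinsum M (\<lambda>k. - lam k * a k)"
    by (simp add: sinsum_def fun_eq_iff sum_negf[symmetric])
  finally show ?thesis .
qed

lemma PM_eq: "PM M f = sinsum M (\<lambda>k. L2inner f (hb k))"
  unfolding PM_def sinsum_def ..

lemma PM_sinsum[simp]: "PM M (sinsum M a) = sinsum M a"
  unfolding PM_eq by (rule sinsum_cong) simp

lemma sinsum_add: "(\<lambda>y. sinsum M a y + c * sinsum M b y) = sinsum M (\<lambda>k. a k + c * b k)"
  by (simp add: sinsum_def fun_eq_iff sum.distrib sum_distrib_left algebra_simps)


lemma Bnl_sinsum: "Bnl (sinsum M a) (sinsum M b) = (\<lambda>y. sinsum M a y * dsinsum M b y + sinsum M b y * dsinsum M a y)"
  unfolding Bnl_def grad_sinsum ..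

lemma cont_Bnl[continuous_intros]: "continuous_on S (Bnl (sinsum M a) (sinsum M b))"
  unfolding Bnl_sinsum by (intro continuous_intros)

lemma Bnl_hb:
  "L2inner (Bnl (sinsum M a) (sinsum M b)) (hb k) = - (real k * pi) * integral {0..1} (\<lambda>y. sinsum M a y * sinsum M b y * hc k y)"
proof -
  define X where "X = sinsum M a"
  define E where "E = sinsum M b"
  define P where "P = (\<lambda>y. (X y * dsinsum M b y + E y * dsinsum M a y) * hb k y)"
  define Q where "Q = (\<lambda>y. X y * E y * hc k y)"
  have d: "((\<lambda>y. X y * E y * hb k y) has_vector_derivative (P y + (real k * pi) * Q y)) (at y within {0..1})" for y
    unfolding has_real_derivative_iff_has_vector_derivative[symmetric] P_def Q_def X_def E_def
    by (auto intro!: derivative_eq_intros sinsum_deriv hb_deriv simp: algebra_simps)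
  have "((\<lambda>y. P y + (real k * pi) * Q y) has_integral (X 1 * E 1 * hb k 1 - X 0 * E 0 * hb k 0)) {0..1}"
    by (rule fundamental_theorem_of_calculus) (auto intro: d)
  then have F: "((\<lambda>y. P y + (real k * pi) * Q y) has_integral 0) {0..1}" by simp
  have Qi: "(Q has_integral integral {0..1} Q) {0..1}"
    unfolding Q_def X_def E_def by (intro integrable_integral integrable_continuous_interval continuous_intros)
  have "((\<lambda>y. (P y + (real k * pi) * Q y) - (real k * pi) * Q y) has_integral (0 - (real k * pi) * integral {0..1} Q)) {0..1}"
    by (intro has_integral_diff F has_integral_mult_right Qi)
  then have "(P has_integral (- (real k * pi) * integral {0..1} Q)) {0..1}" by simp
  then have "integral {0..1} P = - (real k * pi) * integral {0..1} Q" by (rule integral_unique)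
  then show ?thesis unfolding L2inner_def Bnl_sinsum P_def Q_def X_def E_def by simp
qed

lemma Bnl_self:
  "L2inner (Bnl (sinsum M a) (sinsum M b)) (sinsum M b) = (1/2) * integral {0..1} (\<lambda>y. dsinsum M a y * (sinsum M b y)^2)"
proof -
  define X where "X = sinsum M a"
  define E where "E = sinsum M b"
  define P where "P = (\<lambda>y. X y * E y * dsinsum M b y)"
  define Q where "Q = (\<lambda>y. dsinsum M a y * (E y)^2)"
  have d: "((\<lambda>y. X y * (E y)^2) has_vector_derivative (2 * P y + Q y)) (at y within {0..1})" for y
    unfolding has_real_derivative_iff_has_vector_derivative[symmetric] P_def Q_def X_def E_def
    by (auto intro!: derivative_eq_intros sinsum_deriv simp: algebra_simps power2_eq_square)
  have "((\<lambda>y. 2 * P y + Q y) has_integral (X 1 * (E 1)^2 - X 0 * (E 0)^2)) {0..1}"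
    by (rule fundamental_theorem_of_calculus) (auto intro: d)
  then have F: "((\<lambda>y. 2 * P y + Q y) has_integral 0) {0..1}" by (simp add: X_def E_def)
  have Qi: "(Q has_integral integral {0..1} Q) {0..1}"
    unfolding Q_def X_def E_def by (intro integrable_integral integrable_continuous_interval continuous_intros)
  have "((\<lambda>y. (1/2) * ((2 * P y + Q y) - Q y) + Q y) has_integral ((1/2) * (0 - integral {0..1} Q) + integral {0..1} Q)) {0..1}"
    by (intro has_integral_add has_integral_mult_right has_integral_diff F Qi)
  then have "((\<lambda>y. P y + Q y) has_integral ((1/2) * integral {0..1} Q)) {0..1}" by simp
  then have "integral {0..1} (\<lambda>y. P y + Q y) = (1/2) * integral {0..1} Q" by (rule integral_unique)
  moreover have "(\<lambda>y. Bnl X E y * E y) = (\<lambda>y. P y + Q y)"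
    unfolding X_def E_def Bnl_sinsum P_def Q_def by (auto simp: fun_eq_iff algebra_simps power2_eq_square)
  ultimately show ?thesis unfolding L2inner_def Q_def X_def E_def by simp
qed

lemma sum_coef_Bnl:
  "(\<Sum>k\<in>{1..M}. b k * L2inner (Bnl (sinsum M a) (sinsum M b)) (hb k)) = L2inner (Bnl (sinsum M a) (sinsum M b)) (sinsum M b)"
proof -
  have "L2inner (Bnl (sinsum M a) (sinsum M b)) (sinsum M b) = integral {0..1} (\<lambda>y. sinsum M b y * Bnl (sinsum M a) (sinsum M b) y)"
    unfolding L2inner_def by (simp add: mult.commute)
  also have "\<dots> = (\<Sum>k\<in>{1..M}. b k * integral {0..1} (\<lambda>y. hb k y * Bnl (sinsum M a) (sinsum M b) y))"
    by (rule integral_unique[OF int_sinsum]) (intro continuous_intros)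
  finally show ?thesis unfolding L2inner_def by (simp add: mult.commute)
qed

lemma amgm_opt:
  fixes x A B :: real
  assumes A: "A \<ge> 0" and B: "B \<ge> 0" and H: "\<And>\<mu>. \<mu> > 0 \<Longrightarrow> 2 * x \<le> \<mu> * A + B / \<mu>"
  shows "x \<le> sqrt A * sqrt B"
proof (cases "A > 0 \<and> B > 0")
  case True
  define \<mu> where "\<mu> = sqrt B / sqrt A"
  have mu: "\<mu> > 0" using True by (simp add: \<mu>_def)
  have "\<mu> * A = sqrt A * sqrt B" using True
    by (simp add: \<mu>_def field_simps)
  moreover have "B / \<mu> = sqrt A * sqrt B" using True
    by (simp add: \<mu>_def field_simps)
  ultimately show ?thesis using H[OF mu] by simp
next
  case False
  show ?thesis
  proof (rule ccontr)
    assume "\<not> ?thesis"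
    with False have x: "x > 0" using A B by auto
    show False
    proof (cases "A = 0")
      case True
      define \<mu> where "\<mu> = B / x + 1"
      have "B / x \<ge> 0" using x B by simp
      then have mu: "\<mu> > 0" by (simp add: \<mu>_def)
      have "B / \<mu> < 2 * x"
      proof -
        have "B < 2 * x * \<mu>" using x B by (simp add: \<mu>_def algebra_simps)
        then show ?thesis using mu by (simp add: divide_less_eq)
      qed
      then show False using H[OF mu] True by simp
    next
      case False
      then have B0: "B = 0" using \<open>\<not> (A > 0 \<and> B > 0)\<close> A B by auto
      define \<mu> where "\<mu> = x / (A + 1)"
      have mu: "\<mu> > 0" using x A by (simp add: \<mu>_def)
      have "\<mu> * A < 2 * x"
      proof -
        have "0 \<le> x * A" using x A by simp
        then have "x * A < 2 * x * (A + 1)" using x by (simp add: algebra_simps)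
        then show ?thesis using A by (simp add: \<mu>_def field_simps)
      qed
      then show False using H[OF mu] B0 by simp
    qed
  qed
qed

lemma CS_int:
  fixes f g :: "real \<Rightarrow> real"
  assumes f: "continuous_on {0..1} f" and g: "continuous_on {0..1} g"
  shows "integral {0..1} (\<lambda>y. \<bar>f y\<bar> * \<bar>g y\<bar>) \<le> sqrt (integral {0..1} (\<lambda>y. (f y)^2)) * sqrt (integral {0..1} (\<lambda>y. (g y)^2))"
proof (rule amgm_opt)
  show "0 \<le> integral {0..1} (\<lambda>y. (f y)^2)" by (rule integral_nonneg) (auto intro: integrable_continuous_interval continuous_intros f)
  show "0 \<le> integral {0..1} (\<lambda>y. (g y)^2)" by (rule integral_nonneg) (auto intro: integrable_continuous_interval continuous_intros g)
  fix \<mu> :: real assume mu: "\<mu> > 0"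
  have "2 * integral {0..1} (\<lambda>y. \<bar>f y\<bar> * \<bar>g y\<bar>) = integral {0..1} (\<lambda>y. 2 * (\<bar>f y\<bar> * \<bar>g y\<bar>))"
    by simp
  also have "\<dots> \<le> integral {0..1} (\<lambda>y. \<mu> * (f y)^2 + (g y)^2 / \<mu>)"
  proof (rule integral_le)
    show "(\<lambda>y. 2 * (\<bar>f y\<bar> * \<bar>g y\<bar>)) integrable_on {0..1}"
      by (intro integrable_continuous_interval continuous_intros f g)
    show "(\<lambda>y. \<mu> * (f y)^2 + (g y)^2 / \<mu>) integrable_on {0..1}"
      using mu by (intro integrable_continuous_interval continuous_intros f g) auto
    fix y
    have "0 \<le> (\<mu> * \<bar>f y\<bar> - \<bar>g y\<bar>)^2 / \<mu>" using mu by simp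
    also have "\<dots> = \<mu> * (f y)^2 + (g y)^2 / \<mu> - 2 * (\<bar>f y\<bar> * \<bar>g y\<bar>)"
      using mu by (simp add: field_simps power2_eq_square)
    finally show "2 * (\<bar>f y\<bar> * \<bar>g y\<bar>) \<le> \<mu> * (f y)^2 + (g y)^2 / \<mu>" by simp
  qed
  also have "\<dots> = \<mu> * integral {0..1} (\<lambda>y. (f y)^2) + integral {0..1} (\<lambda>y. (g y)^2) / \<mu>"
    using mu by (subst integral_add) (auto intro!: integrable_continuous_interval continuous_intros f g)
  finally show "2 * integral {0..1} (\<lambda>y. \<bar>f y\<bar> * \<bar>g y\<bar>) \<le> \<mu> * integral {0..1} (\<lambda>y. (f y)^2) + integral {0..1} (\<lambda>y. (g y)^2) / \<mu>" .
qed


lemma int_abs_le: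
  fixes f :: "real \<Rightarrow> real"
  assumes "continuous_on {a..b} f"
  shows "\<bar>integral {a..b} f\<bar> \<le> integral {a..b} (\<lambda>y. \<bar>f y\<bar>)"
proof -
  have i1: "f integrable_on {a..b}" and i2: "(\<lambda>y. \<bar>f y\<bar>) integrable_on {a..b}"
    by (intro integrable_continuous_interval continuous_intros assms)+
  have "integral {a..b} f \<le> integral {a..b} (\<lambda>y. \<bar>f y\<bar>)" by (rule integral_le[OF i1 i2]) simp
  moreover have "- integral {a..b} f \<le> integral {a..b} (\<lambda>y. \<bar>f y\<bar>)"
    using integral_le[OF integrable_neg[OF i1] i2] by simp
  ultimately show ?thesis by linarith
qed

lemma mult_le_abs_abs: "(x::real) * y \<le> \<bar>x\<bar> * \<bar>y\<bar>"
  by (metis abs_ge_self abs_mult)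

lemma L2norm_alt: "L2norm f = sqrt (integral {0..1} (\<lambda>y. (f y)^2))"
  unfolding L2norm_def L2inner_def by (simp add: power2_eq_square)

lemma agmon:
  assumes y: "y \<in> {0..1}"
  shows "(sinsum M b y)^2 \<le> 2 * L2norm (sinsum M b) * L2norm (grad (sinsum M b))"
proof -
  define E where "E = sinsum M b"
  define dE where "dE = dsinsum M b"
  have d: "((\<lambda>z. (E z)^2) has_vector_derivative (2 * E z * dE z)) (at z within {0..y})" for z
    unfolding has_real_derivative_iff_has_vector_derivative[symmetric] E_def dE_def
    by (auto intro!: derivative_eq_intros sinsum_deriv)
  have "((\<lambda>z. 2 * E z * dE z) has_integral ((E y)^2 - (E 0)^2)) {0..y}"
    using y by (intro fundamental_theorem_of_calculus) (auto intro: d)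
  then have "(E y)^2 = integral {0..y} (\<lambda>z. 2 * E z * dE z)" by (simp add: E_def integral_unique)
  also have "\<dots> \<le> integral {0..y} (\<lambda>z. 2 * (\<bar>E z\<bar> * \<bar>dE z\<bar>))"
    by (rule integral_le) (auto intro!: integrable_continuous_interval continuous_intros mult_le_abs_abs simp: E_def dE_def mult.assoc)
  also have "\<dots> \<le> integral {0..1} (\<lambda>z. 2 * (\<bar>E z\<bar> * \<bar>dE z\<bar>))"
    using y by (intro integral_subset_le) (auto intro!: integrable_continuous_interval continuous_intros simp: E_def dE_def)
  also have "\<dots> = 2 * integral {0..1} (\<lambda>z. \<bar>E z\<bar> * \<bar>dE z\<bar>)" by simp
  also have "\<dots> \<le> 2 * (sqrt (integral {0..1} (\<lambda>y. (E y)^2)) * sqrt (integral {0..1} (\<lambda>y. (dE y)^2)))"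
    by (intro mult_left_mono CS_int) (auto intro!: continuous_intros simp: E_def dE_def)
  finally show ?thesis unfolding E_def dE_def L2norm_alt grad_sinsum by simp
qed

lemma agmon_abs:
  assumes y: "y \<in> {0..1}"
  shows "\<bar>sinsum M b y\<bar> \<le> sqrt (2 * L2norm (sinsum M b) * L2norm (grad (sinsum M b)))"
  using agmon[OF y] real_sqrt_le_mono by fastforce

lemma L2norm_nonneg: "L2norm f \<ge> 0"
proof (cases "(\<lambda>y. f y * f y) integrable_on {0..1}")
  case True then show ?thesis by (auto simp: L2norm_def L2inner_def intro!: integral_nonneg)
next
  case False then show ?thesis by (simp add: L2norm_def L2inner_def not_integrable_integral)
qed

lemma cubic_term:
  "\<bar>integral {0..1} (\<lambda>y. dsinsum M a y * (sinsum M b y)^2)\<bar>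
   \<le> sqrt (2 * L2norm (sinsum M b) * L2norm (grad (sinsum M b))) * L2norm (grad (sinsum M a)) * L2norm (sinsum M b)"
proof -
  define E where "E = sinsum M b"
  define dX where "dX = dsinsum M a"
  define R where "R = sqrt (2 * L2norm (sinsum M b) * L2norm (grad (sinsum M b)))"
  have "\<bar>integral {0..1} (\<lambda>y. dX y * (E y)^2)\<bar> \<le> integral {0..1} (\<lambda>y. \<bar>dX y * (E y)^2\<bar>)"
    by (rule int_abs_le) (auto intro!: continuous_intros simp: E_def dX_def)
  also have "\<dots> \<le> integral {0..1} (\<lambda>y. R * (\<bar>dX y\<bar> * \<bar>E y\<bar>))"
  proof (rule integral_le)
    show "(\<lambda>y. \<bar>dX y * (E y)^2\<bar>) integrable_on {0..1}"
      by (auto intro!: integrable_continuous_interval continuous_intros simp: E_def dX_def)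
    show "(\<lambda>y. R * (\<bar>dX y\<bar> * \<bar>E y\<bar>)) integrable_on {0..1}"
      by (auto intro!: integrable_continuous_interval continuous_intros simp: E_def dX_def)
    fix y :: real assume y: "y \<in> {0..1}"
    have "\<bar>E y\<bar> \<le> R" unfolding E_def R_def by (rule agmon_abs[OF y])
    then have "\<bar>dX y\<bar> * \<bar>E y\<bar> * \<bar>E y\<bar> \<le> \<bar>dX y\<bar> * \<bar>E y\<bar> * R"
      by (intro mult_left_mono) auto
    then show "\<bar>dX y * (E y)^2\<bar> \<le> R * (\<bar>dX y\<bar> * \<bar>E y\<bar>)"
      by (simp add: abs_mult power2_eq_square algebra_simps)
  qed
  also have "\<dots> = R * integral {0..1} (\<lambda>y. \<bar>dX y\<bar> * \<bar>E y\<bar>)" by simp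
  also have "\<dots> \<le> R * (sqrt (integral {0..1} (\<lambda>y. (dX y)^2)) * sqrt (integral {0..1} (\<lambda>y. (E y)^2)))"
    by (intro mult_left_mono CS_int) (auto intro!: continuous_intros simp: E_def dX_def R_def L2norm_nonneg)
  finally show ?thesis unfolding E_def dX_def R_def L2norm_alt grad_sinsum by (simp add: mult.assoc)
qed

lemma int_finsum:
  fixes g :: "real \<Rightarrow> real" and \<phi> :: "'k \<Rightarrow> real \<Rightarrow> real" and d :: "'k \<Rightarrow> real"
  assumes "finite S" and g: "continuous_on {0..1} g" and ph: "\<And>k. k \<in> S \<Longrightarrow> continuous_on {0..1} (\<phi> k)"
  shows "integral {0..1} (\<lambda>y. (\<Sum>k\<in>S. d k * \<phi> k y) * g y) = (\<Sum>k\<in>S. d k * integral {0..1} (\<lambda>y. \<phi> k y * g y))"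
proof -
  have "((\<lambda>y. \<Sum>k\<in>S. d k * (\<phi> k y * g y)) has_integral (\<Sum>k\<in>S. d k * integral {0..1} (\<lambda>y. \<phi> k y * g y))) {0..1}"
  proof (intro has_integral_sum assms(1))
    fix k assume k: "k \<in> S"
    have "continuous_on {0..1} (\<lambda>y. \<phi> k y * g y)" using ph[OF k] g by (intro continuous_on_mult) auto
    then have "((\<lambda>y. \<phi> k y * g y) has_integral integral {0..1} (\<lambda>y. \<phi> k y * g y)) {0..1}"
      by (intro integrable_integral integrable_continuous_interval)
    then show "((\<lambda>y. d k * (\<phi> k y * g y)) has_integral d k * integral {0..1} (\<lambda>y. \<phi> k y * g y)) {0..1}"
      by (rule has_integral_mult_right)
  qed
  then show ?thesis by (simp add: sum_distrib_right mult.assoc integral_unique)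
qed

lemma bessel_hc:
  assumes f: "continuous_on {0..1} f"
  shows "(\<Sum>k\<in>{1..M}. (integral {0..1} (\<lambda>y. f y * hc k y))^2) \<le> integral {0..1} (\<lambda>y. (f y)^2)"
proof -
  define d where "d k = integral {0..1} (\<lambda>y. f y * hc k y)" for k
  define P where "P y = (\<Sum>k\<in>{1..M}. d k * hc k y)" for y
  have cP: "continuous_on {0..1} P" unfolding P_def by (intro continuous_intros)
  have fP: "integral {0..1} (\<lambda>y. P y * f y) = (\<Sum>k\<in>{1..M}. (d k)^2)"
    unfolding P_def by (subst int_finsum) (auto intro!: continuous_intros f simp: d_def power2_eq_square mult.commute)
  have PP: "integral {0..1} (\<lambda>y. P y * P y) = (\<Sum>k\<in>{1..M}. (d k)^2)"
  proof -
    have e: "(\<lambda>y. P y * P y) = (\<lambda>y. (\<Sum>j\<in>{1..M}. d j * hc j y) * P y)" by (simp add: P_def)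
    have "integral {0..1} (\<lambda>y. P y * P y) = (\<Sum>j\<in>{1..M}. d j * integral {0..1} (\<lambda>y. hc j y * P y))"
      unfolding e by (subst int_finsum) (auto intro!: continuous_intros cP)
    also have "\<dots> = (\<Sum>j\<in>{1..M}. (d j)^2)"
    proof (intro sum.cong refl)
      fix j assume j: "j \<in> {1..M}"
      have "integral {0..1} (\<lambda>y. hc j y * P y) = integral {0..1} (\<lambda>y. P y * hc j y)" by (simp add: mult.commute)
      also have "\<dots> = (\<Sum>k\<in>{1..M}. d k * integral {0..1} (\<lambda>y. hc k y * hc j y))"
        unfolding P_def by (subst int_finsum) (auto intro!: continuous_intros)
      also have "\<dots> = (\<Sum>k\<in>{1..M}. if k = j then d k else 0)"
        using j by (intro sum.cong refl) (simp add: integral_hc_hc)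
      also have "\<dots> = d j" using j by (subst sum.delta) auto
      finally show "d j * integral {0..1} (\<lambda>y. hc j y * P y) = (d j)^2" by (simp add: power2_eq_square)
    qed
    finally show ?thesis .
  qed
  have "0 \<le> integral {0..1} (\<lambda>y. (f y - P y)^2)"
    by (rule integral_nonneg) (auto intro!: integrable_continuous_interval continuous_intros f cP)
  also have "\<dots> = integral {0..1} (\<lambda>y. (f y)^2 - 2 * (P y * f y) + P y * P y)"
    by (simp add: power2_eq_square algebra_simps)
  also have "\<dots> = integral {0..1} (\<lambda>y. (f y)^2) - 2 * integral {0..1} (\<lambda>y. P y * f y) + integral {0..1} (\<lambda>y. P y * P y)"
    by (subst integral_add integral_diff, auto intro!: integrable_continuous_interval continuous_intros f cP)+
  finally show ?thesis unfolding fP PP d_def by simp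
qed

lemma sup_bound:
  assumes w: "\<And>k. k \<in> {1..M} \<Longrightarrow> w k > 0"
  shows "\<bar>sinsum M a y\<bar> \<le> sqrt 2 * sqrt (\<Sum>k\<in>{1..M}. (w k)^2 * (a k)^2) * sqrt (\<Sum>k\<in>{1..M}. 1 / (w k)^2)"
proof -
  have "\<bar>sinsum M a y\<bar> \<le> (\<Sum>k\<in>{1..M}. \<bar>a k * hb k y\<bar>)" unfolding sinsum_def by (rule sum_abs)
  also have "\<dots> \<le> (\<Sum>k\<in>{1..M}. sqrt 2 * ((w k * \<bar>a k\<bar>) * (1 / w k)))"
  proof (intro sum_mono)
    fix k assume k: "k \<in> {1..M}"
    have "\<bar>a k * hb k y\<bar> \<le> \<bar>a k\<bar> * sqrt 2" unfolding abs_mult by (intro mult_left_mono abs_hb) auto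
    then show "\<bar>a k * hb k y\<bar> \<le> sqrt 2 * ((w k * \<bar>a k\<bar>) * (1 / w k))" using w[OF k] by (simp add: ac_simps)
  qed
  also have "\<dots> = sqrt 2 * (\<Sum>k\<in>{1..M}. (w k * \<bar>a k\<bar>) * (1 / w k))" by (simp add: sum_distrib_left)
  also have "\<dots> \<le> sqrt 2 * (sqrt (\<Sum>k\<in>{1..M}. (w k * \<bar>a k\<bar>)^2) * sqrt (\<Sum>k\<in>{1..M}. (1 / w k)^2))"
  proof (intro mult_left_mono)
    have "(\<Sum>k\<in>{1..M}. (w k * \<bar>a k\<bar>) * (1 / w k))^2 \<le> (\<Sum>k\<in>{1..M}. (w k * \<bar>a k\<bar>)^2) * (\<Sum>k\<in>{1..M}. (1 / w k)^2)"
      by (rule Cauchy_Schwarz_ineq_sum)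
    then have "sqrt ((\<Sum>k\<in>{1..M}. (w k * \<bar>a k\<bar>) * (1 / w k))^2) \<le> sqrt ((\<Sum>k\<in>{1..M}. (w k * \<bar>a k\<bar>)^2) * (\<Sum>k\<in>{1..M}. (1 / w k)^2))"
      by (rule real_sqrt_le_mono)
    then show "(\<Sum>k\<in>{1..M}. (w k * \<bar>a k\<bar>) * (1 / w k)) \<le> sqrt (\<Sum>k\<in>{1..M}. (w k * \<bar>a k\<bar>)^2) * sqrt (\<Sum>k\<in>{1..M}. (1 / w k)^2)"
      by (simp add: real_sqrt_mult)
  qed simp
  finally show ?thesis by (simp add: power_mult_distrib power_divide)
qed


lemma int_sq_sinsum: "integral {0..1} (\<lambda>y. (sinsum M b y)^2) = (\<Sum>k\<in>{1..M}. (b k)^2)"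
  using L2inner_sinsum[of M b b] unfolding L2inner_def by (simp add: power2_eq_square)

lemma lam_exp_le:
  assumes "\<sigma> > 0"
  shows "lam k * exp (- 2 * lam k * \<sigma>) \<le> 1 / (2 * \<sigma>)"
proof -
  have l: "lam k \<ge> 0" by (simp add: lam_def)
  have "2 * lam k * \<sigma> \<le> exp (2 * lam k * \<sigma>)" using exp_ge_add_one_self[of "2 * lam k * \<sigma>"] by linarith
  then have "2 * \<sigma> * lam k * exp (- 2 * lam k * \<sigma>) \<le> exp (2 * lam k * \<sigma>) * exp (- 2 * lam k * \<sigma>)"
    by (intro mult_right_mono) (auto simp: ac_simps)
  also have "\<dots> = 1" by (simp add: exp_add[symmetric])
  finally show ?thesis using assms by (simp add: field_simps)
qed

lemma duhamel_kernel_bound: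
  assumes \<sigma>: "\<sigma> > 0" and K: "\<And>y. y \<in> {0..1} \<Longrightarrow> \<bar>sinsum M a y\<bar> \<le> K"
  shows "sqrt (\<Sum>k\<in>{1..M}. (2 * exp (- lam k * \<sigma>) * L2inner (Bnl (sinsum M a) (sinsum M b)) (hb k))^2)
         \<le> sqrt (2 / \<sigma>) * K * sqrt (\<Sum>k\<in>{1..M}. (b k)^2)"
proof -
  define d where "d k = integral {0..1} (\<lambda>y. (sinsum M a y * sinsum M b y) * hc k y)" for k
  have K0: "K \<ge> 0" using K[of 0] by auto
  have "(\<Sum>k\<in>{1..M}. (2 * exp (- lam k * \<sigma>) * L2inner (Bnl (sinsum M a) (sinsum M b)) (hb k))^2)
      = (\<Sum>k\<in>{1..M}. 4 * (lam k * exp (- 2 * lam k * \<sigma>)) * (d k)^2)"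
  proof (intro sum.cong refl)
    fix k
    have e: "(exp (- lam k * \<sigma>))^2 = exp (- 2 * lam k * \<sigma>)" by (simp add: power2_eq_square exp_add[symmetric])
    have lk: "(real k * pi)^2 = lam k" by (simp add: lam_def mult.commute)
    have B: "L2inner (Bnl (sinsum M a) (sinsum M b)) (hb k) = - (real k * pi) * d k" by (simp add: Bnl_hb d_def)
    have "(2 * exp (- lam k * \<sigma>) * (- (real k * pi) * d k))^2 = 4 * ((exp (- lam k * \<sigma>))^2 * (real k * pi)^2) * (d k)^2"
      by (simp add: power_mult_distrib)
    then show "(2 * exp (- lam k * \<sigma>) * L2inner (Bnl (sinsum M a) (sinsum M b)) (hb k))^2 = 4 * (lam k * exp (- 2 * lam k * \<sigma>)) * (d k)^2"
      unfolding B e lk by (simp add: ac_simps)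
  qed
  also have "\<dots> \<le> (\<Sum>k\<in>{1..M}. (2 / \<sigma>) * (d k)^2)"
  proof (intro sum_mono)
    fix k
    have "4 * (lam k * exp (- 2 * lam k * \<sigma>)) \<le> 4 * (1 / (2 * \<sigma>))" using lam_exp_le[OF \<sigma>, of k] by linarith
    also have "\<dots> = 2 / \<sigma>" by simp
    finally have "4 * (lam k * exp (- 2 * lam k * \<sigma>)) \<le> 2 / \<sigma>" .
    then show "4 * (lam k * exp (- 2 * lam k * \<sigma>)) * (d k)^2 \<le> (2 / \<sigma>) * (d k)^2"
      by (intro mult_right_mono) auto
  qed
  also have "\<dots> = (2 / \<sigma>) * (\<Sum>k\<in>{1..M}. (d k)^2)" by (simp add: sum_distrib_left)
  also have "\<dots> \<le> (2 / \<sigma>) * integral {0..1} (\<lambda>y. (sinsum M a y * sinsum M b y)^2)"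
    unfolding d_def using \<sigma> by (intro mult_left_mono bessel_hc) (auto intro!: continuous_intros)
  also have "\<dots> \<le> (2 / \<sigma>) * integral {0..1} (\<lambda>y. K^2 * (sinsum M b y)^2)"
  proof (intro mult_left_mono integral_le)
    fix y :: real assume y: "y \<in> {0..1}"
    have "(sinsum M a y)^2 \<le> K^2" using K[OF y] by (metis abs_ge_zero power2_abs power_mono)
    then show "(sinsum M a y * sinsum M b y)^2 \<le> K^2 * (sinsum M b y)^2"
      by (simp add: power_mult_distrib mult_right_mono)
  qed (use \<sigma> in \<open>auto intro!: integrable_continuous_interval continuous_intros\<close>)
  also have "\<dots> = (2 / \<sigma>) * K^2 * (\<Sum>k\<in>{1..M}. (b k)^2)" by (simp add: int_sq_sinsum)
  finally have "sqrt (\<Sum>k\<in>{1..M}. (2 * exp (- lam k * \<sigma>) * L2inner (Bnl (sinsum M a) (sinsum M b)) (hb k))^2)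
     \<le> sqrt ((2 / \<sigma>) * K^2 * (\<Sum>k\<in>{1..M}. (b k)^2))" by (rule real_sqrt_le_mono)
  also have "\<dots> = sqrt (2 / \<sigma>) * K * sqrt (\<Sum>k\<in>{1..M}. (b k)^2)" by (simp only: real_sqrt_mult real_sqrt_abs abs_of_nonneg[OF K0])
  finally show ?thesis .
qed

lemma energy_alg:
  fixes A B C s \<epsilon> :: real
  assumes "A \<ge> 0" "B \<ge> 0" "C \<ge> 0" "\<epsilon> > 0" "s^2 = 2 * B * C"
  shows "2 * s * A * B \<le> C^2 + (\<epsilon> * A^2 + 1 / \<epsilon>^2) * B^2"
proof -
  have "2 * s * A * B \<le> \<epsilon> * A^2 * B^2 + s^2 / \<epsilon>"
  proof -
    have "0 \<le> (\<epsilon> * A * B - s)^2 / \<epsilon>" using assms by simp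
    also have "\<dots> = \<epsilon> * A^2 * B^2 + s^2 / \<epsilon> - 2 * s * A * B" using assms(4) by (simp add: field_simps power2_eq_square)
    finally show ?thesis by simp
  qed
  also have "s^2 / \<epsilon> = 2 * C * (B / \<epsilon>)" using assms by (simp add: field_simps)
  also have "2 * C * (B / \<epsilon>) \<le> C^2 + (B / \<epsilon>)^2" using sum_squares_bound[of C "B/\<epsilon>"] by simp
  finally show ?thesis using assms(4) by (simp add: field_simps power2_eq_square)
qed

lemma energy_rate:
  assumes \<epsilon>: "\<epsilon> > 0"
  shows "2 * (\<Sum>k\<in>{1..M}. b k * (- lam k * b k + 2 * L2inner (Bnl (sinsum M a) (sinsum M b)) (hb k)))
     \<le> (\<epsilon> * (\<Sum>k\<in>{1..M}. lam k * (a k)^2) + 1 / \<epsilon>^2) * (\<Sum>k\<in>{1..M}. (b k)^2)"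
proof -
  define A where "A = L2norm (grad (sinsum M a))"
  define B where "B = L2norm (sinsum M b)"
  define C where "C = L2norm (grad (sinsum M b))"
  define s where "s = sqrt (2 * B * C)"
  have ABC: "A \<ge> 0" "B \<ge> 0" "C \<ge> 0" by (auto simp: A_def B_def C_def L2norm_nonneg)
  have s2: "s^2 = 2 * B * C" using ABC by (simp add: s_def)
  have "2 * (\<Sum>k\<in>{1..M}. b k * (- lam k * b k + 2 * L2inner (Bnl (sinsum M a) (sinsum M b)) (hb k)))
      = -2 * (\<Sum>k\<in>{1..M}. lam k * (b k)^2) + 4 * (\<Sum>k\<in>{1..M}. b k * L2inner (Bnl (sinsum M a) (sinsum M b)) (hb k))"
  proof -
    have "2 * (\<Sum>k\<in>{1..M}. b k * (- lam k * b k + 2 * L2inner (Bnl (sinsum M a) (sinsum M b)) (hb k)))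
      = (\<Sum>k\<in>{1..M}. 2 * (b k * (- lam k * b k + 2 * L2inner (Bnl (sinsum M a) (sinsum M b)) (hb k))))"
      by (simp only: sum_distrib_left)
    also have "\<dots> = (\<Sum>k\<in>{1..M}. -2 * (lam k * (b k)^2) + 4 * (b k * L2inner (Bnl (sinsum M a) (sinsum M b)) (hb k)))"
      by (rule sum.cong) (simp_all add: algebra_simps power2_eq_square)
    also have "\<dots> = -2 * (\<Sum>k\<in>{1..M}. lam k * (b k)^2) + 4 * (\<Sum>k\<in>{1..M}. b k * L2inner (Bnl (sinsum M a) (sinsum M b)) (hb k))"
      by (simp only: sum.distrib sum_distrib_left)
    finally show ?thesis .
  qed
  also have "\<dots> = -2 * C^2 + 2 * integral {0..1} (\<lambda>y. dsinsum M a y * (sinsum M b y)^2)"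
    unfolding sum_coef_Bnl Bnl_self C_def L2norm_grad_sq by simp
  also have "\<dots> \<le> -2 * C^2 + 2 * (s * A * B)"
    using cubic_term[of M a b] unfolding s_def A_def B_def C_def by linarith
  also have "\<dots> \<le> (\<epsilon> * A^2 + 1 / \<epsilon>^2) * B^2"
  proof -
    have "C^2 \<ge> 0" by simp
    moreover have "2 * (s * A * B) = 2 * s * A * B" by simp
    ultimately show ?thesis using energy_alg[OF ABC \<epsilon> s2] by linarith
  qed
  finally show ?thesis unfolding A_def B_def L2norm_grad_sq L2norm_sq .
qed


lemma sing_int:
  fixes G :: "real \<Rightarrow> real"
  assumes sr: "s < r" and \<alpha>: "0 \<le> \<alpha>" "\<alpha> < 1" and Aq: "Aq \<ge> 0"
    and Gc: "continuous_on {s..r} G"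
    and bound: "\<And>\<rho>. s < \<rho> \<Longrightarrow> \<rho> < r \<Longrightarrow> G \<rho> \<le> Aq * (r - \<rho>) powr (-1/2) * (\<rho> - s) powr (- \<alpha>)"
  shows "(r - s) powr \<alpha> * integral {s..r} G \<le> 2 * (1 / (1 - \<alpha>) + 2) * Aq * sqrt (r - s)"
proof -
  define L where "L = (r - s) / 2"
  define m where "m = s + L"
  have L: "L > 0" using sr by (simp add: L_def)
  have sm: "s \<le> m" "m \<le> r" using L sr by (auto simp: m_def L_def field_simps)
  have rm: "r - m = L" unfolding m_def L_def by (simp add: field_simps)
  have rL: "r - L = m" using rm by linarith
  have Gi: "G integrable_on {s..m}" "G integrable_on {m..r}"
    using sm by (auto intro!: integrable_continuous_interval continuous_on_subset[OF Gc])
  have h1: "((\<lambda>x. x powr (-\<alpha>)) has_integral (L powr (-\<alpha>+1) / (-\<alpha>+1))) {0..L}"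
    using \<alpha> L by (intro has_integral_powr_from_0) auto
  have h1': "((\<lambda>x. (x + - s) powr (-\<alpha>)) has_integral (L powr (-\<alpha>+1) / (-\<alpha>+1))) {0 - - s..L - - s}"
    by (rule has_integral_shift_real_ivl[OF h1])
  have h1'': "((\<lambda>x. Aq * L powr (-1/2) * (x - s) powr (-\<alpha>)) has_integral (Aq * L powr (-1/2) * (L powr (-\<alpha>+1) / (-\<alpha>+1)))) {s..m}"
    using has_integral_mult_right[OF h1', of "Aq * L powr (-1/2)"] by (simp add: m_def add.commute)
  define g1 where "g1 x = (if x = s then G s else Aq * L powr (-1/2) * (x - s) powr (-\<alpha>))" for x
  have g1i: "(g1 has_integral (Aq * L powr (-1/2) * (L powr (-\<alpha>+1) / (-\<alpha>+1)))) {s..m}"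
    by (rule has_integral_spike_finite_eq[THEN iffD1, OF _ _ h1'', of "{s}"]) (auto simp: g1_def)
  have I1: "integral {s..m} G \<le> Aq * L powr (-1/2) * (L powr (-\<alpha>+1) / (-\<alpha>+1))"
  proof (rule has_integral_le[OF integrable_integral[OF Gi(1)] g1i])
    fix x assume x: "x \<in> {s..m}"
    show "G x \<le> g1 x"
    proof (cases "x = s")
      case True then show ?thesis by (simp add: g1_def)
    next
      case False
      then have xs: "s < x" "x < r" using x sm L rm by (auto simp: m_def)
      have "(r - x) powr (-1/2) \<le> L powr (-1/2)"
        using x L sr by (intro powr_mono2') (auto simp: m_def L_def field_simps)
      then have "Aq * (r - x) powr (-1/2) * (x - s) powr (- \<alpha>) \<le> Aq * L powr (-1/2) * (x - s) powr (- \<alpha>)"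
        using Aq by (intro mult_right_mono mult_left_mono) auto
      then show ?thesis using bound[OF xs] False by (simp add: g1_def)
    qed
  qed
  have h2: "((\<lambda>x. x powr (-1/2)) has_integral (L powr (-1/2+1) / (-1/2+1))) {0..L}"
    using L by (intro has_integral_powr_from_0) auto
  have h2r: "((\<lambda>x. (- x) powr (-1/2)) has_integral (L powr (-1/2+1) / (-1/2+1))) {-L..-0}"
    using h2 by (subst has_integral_reflect_real)
  have h2': "((\<lambda>x. (- (x + - r)) powr (-1/2)) has_integral (L powr (-1/2+1) / (-1/2+1))) {-L - - r..-0 - - r}"
    by (rule has_integral_shift_real_ivl[OF h2r])
  have h2'': "((\<lambda>x. Aq * L powr (-\<alpha>) * (r - x) powr (-1/2)) has_integral (Aq * L powr (-\<alpha>) * (L powr (-1/2+1) / (-1/2+1)))) {m..r}"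
    using has_integral_mult_right[OF h2', of "Aq * L powr (-\<alpha>)"] by (simp add: rL)
  define g2 where "g2 x = (if x = r then G r else Aq * L powr (-\<alpha>) * (r - x) powr (-1/2))" for x
  have g2i: "(g2 has_integral (Aq * L powr (-\<alpha>) * (L powr (-1/2+1) / (-1/2+1)))) {m..r}"
    by (rule has_integral_spike_finite_eq[THEN iffD1, OF _ _ h2'', of "{r}"]) (auto simp: g2_def)
  have I2: "integral {m..r} G \<le> Aq * L powr (-\<alpha>) * (L powr (-1/2+1) / (-1/2+1))"
  proof (rule has_integral_le[OF integrable_integral[OF Gi(2)] g2i])
    fix x assume x: "x \<in> {m..r}"
    show "G x \<le> g2 x"
    proof (cases "x = r")
      case True then show ?thesis by (simp add: g2_def)
    next
      case False
      then have xs: "s < x" "x < r" using x sm L rm by (auto simp: m_def)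
      have "(x - s) powr (-\<alpha>) \<le> L powr (-\<alpha>)"
        using x L sr \<alpha> by (intro powr_mono2') (auto simp: m_def L_def field_simps)
      then have "Aq * (r - x) powr (-1/2) * (x - s) powr (- \<alpha>) \<le> Aq * (r - x) powr (-1/2) * L powr (-\<alpha>)"
        using Aq by (intro mult_left_mono) auto
      then show ?thesis using bound[OF xs] False by (simp add: g2_def ac_simps)
    qed
  qed
  have split: "integral {s..r} G = integral {s..m} G + integral {m..r} G"
    using sm by (intro Henstock_Kurzweil_Integration.integral_combine[symmetric]) (auto intro!: integrable_continuous_interval Gc)
  have e1: "L powr (-1/2) * L powr (-\<alpha>+1) = L powr (1/2 - \<alpha>)"
    using L by (simp add: powr_add[symmetric])
  have e2: "L powr (-\<alpha>) * L powr (-1/2+1) = L powr (1/2 - \<alpha>)"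
    using L by (simp add: powr_add[symmetric])
  have "integral {s..r} G \<le> Aq * L powr (1/2 - \<alpha>) * (1 / (1 - \<alpha>) + 2)"
  proof -
    have "integral {s..r} G \<le> Aq * (L powr (-1/2) * L powr (-\<alpha>+1)) / (1 - \<alpha>) + Aq * (L powr (-\<alpha>) * L powr (-1/2+1)) * 2"
      using split I1 I2 by (simp add: algebra_simps)
    also have "\<dots> = Aq * L powr (1/2 - \<alpha>) * (1 / (1 - \<alpha>) + 2)"
      unfolding e1 e2 by (simp add: algebra_simps)
    finally show ?thesis .
  qed
  then have "(r - s) powr \<alpha> * integral {s..r} G \<le> (r - s) powr \<alpha> * (Aq * L powr (1/2 - \<alpha>) * (1 / (1 - \<alpha>) + 2))"
    by (intro mult_left_mono) auto
  also have "(r - s) powr \<alpha> * L powr (1/2 - \<alpha>) = 2 powr \<alpha> * sqrt L"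
  proof -
    have "r - s = 2 * L" by (simp add: L_def)
    then have "(r - s) powr \<alpha> = 2 powr \<alpha> * L powr \<alpha>" using L by (simp add: powr_mult)
    moreover have "L powr \<alpha> * L powr (1/2 - \<alpha>) = sqrt L" using L by (simp add: powr_add[symmetric] powr_half_sqrt)
    ultimately show ?thesis by simp
  qed
  then have "(r - s) powr \<alpha> * (Aq * L powr (1/2 - \<alpha>) * (1 / (1 - \<alpha>) + 2)) = (2 powr \<alpha> * sqrt L) * Aq * (1 / (1 - \<alpha>) + 2)"
    by (metis (no_types, lifting) mult.assoc mult.left_commute)
  also have "\<dots> \<le> (2 * sqrt (r - s)) * Aq * (1 / (1 - \<alpha>) + 2)"
  proof (intro mult_right_mono)
    have "2 powr \<alpha> \<le> 2 powr 1" using \<alpha> by (intro powr_mono) auto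
    moreover have "sqrt L \<le> sqrt (r - s)" using L by (simp add: L_def)
    ultimately show "2 powr \<alpha> * sqrt L \<le> 2 * sqrt (r - s)" using L by (intro mult_mono) auto
    show "0 \<le> 1 / (1 - \<alpha>) + 2" using \<alpha> by simp
  qed (use Aq in auto)
  also have "\<dots> = 2 * (1 / (1 - \<alpha>) + 2) * Aq * sqrt (r - s)" by (simp add: ac_simps)
  finally show ?thesis .
qed


definition Bco :: "nat \<Rightarrow> (nat \<Rightarrow> real \<Rightarrow> real) \<Rightarrow> (nat \<Rightarrow> real \<Rightarrow> real) \<Rightarrow> nat \<Rightarrow> real \<Rightarrow> real" where
  "Bco M a c k \<tau> = L2inner (Bnl (sinsum M (\<lambda>j. a j \<tau>)) (sinsum M (\<lambda>j. c j \<tau>))) (hb k)"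

lemma Bco_expand:
  "Bco M a c k \<tau> = - (real k * pi) * (\<Sum>i\<in>{1..M}. a i \<tau> * (\<Sum>j\<in>{1..M}. c j \<tau> * integral {0..1} (\<lambda>y. hb j y * (hb i y * hc k y))))"
proof -
  define X where "X = sinsum M (\<lambda>j. a j \<tau>)"
  define E where "E = sinsum M (\<lambda>j. c j \<tau>)"
  have "integral {0..1} (\<lambda>y. X y * E y * hc k y) = integral {0..1} (\<lambda>y. X y * (E y * hc k y))"
    by (simp add: mult.assoc)
  also have "\<dots> = (\<Sum>i\<in>{1..M}. a i \<tau> * integral {0..1} (\<lambda>y. hb i y * (E y * hc k y)))"
    unfolding X_def by (rule integral_unique[OF int_sinsum]) (auto intro!: continuous_intros simp: E_def)
  also have "\<dots> = (\<Sum>i\<in>{1..M}. a i \<tau> * (\<Sum>j\<in>{1..M}. c j \<tau> * integral {0..1} (\<lambda>y. hb j y * (hb i y * hc k y))))"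
  proof (intro sum.cong refl arg_cong2[where f = "(*)"])
    fix i
    have "integral {0..1} (\<lambda>y. hb i y * (E y * hc k y)) = integral {0..1} (\<lambda>y. E y * (hb i y * hc k y))"
      by (simp add: ac_simps)
    also have "\<dots> = (\<Sum>j\<in>{1..M}. c j \<tau> * integral {0..1} (\<lambda>y. hb j y * (hb i y * hc k y)))"
      unfolding E_def by (rule integral_unique[OF int_sinsum]) (auto intro!: continuous_intros)
    finally show "integral {0..1} (\<lambda>y. hb i y * (E y * hc k y)) = (\<Sum>j\<in>{1..M}. c j \<tau> * integral {0..1} (\<lambda>y. hb j y * (hb i y * hc k y)))" .
  qed
  finally show ?thesis unfolding Bco_def Bnl_hb X_def E_def by simp
qed

lemma Bco_cont:
  assumes "\<And>j. j \<in> {1..M} \<Longrightarrow> continuous_on S (a j)" "\<And>j. j \<in> {1..M} \<Longrightarrow> continuous_on S (c j)"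
  shows "continuous_on S (Bco M a c k)"
  unfolding Bco_expand[abs_def] using assms by (intro continuous_intros) auto

lemma duhamel:
  fixes c g :: "nat \<Rightarrow> real \<Rightarrow> real"
  assumes sr: "s < r"
    and der: "\<And>k \<tau>. k \<in> {1..M} \<Longrightarrow> \<tau> \<in> {s..r} \<Longrightarrow> (c k has_real_derivative (- lam k * c k \<tau> + 2 * g k \<tau>)) (at \<tau> within {s..r})"
    and gc: "\<And>k. k \<in> {1..M} \<Longrightarrow> continuous_on {s..r} (g k)"
  shows "sqrt (\<Sum>k\<in>{1..M}. (c k r)^2) \<le> sqrt (\<Sum>k\<in>{1..M}. (exp (- lam k * (r - s)) * c k s)^2)
           + integral {s..r} (\<lambda>\<rho>. sqrt (\<Sum>k\<in>{1..M}. (2 * exp (- lam k * (r - \<rho>)) * g k \<rho>)^2))"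
proof -
  define v where "v k \<rho> = 2 * exp (- lam k * (r - \<rho>)) * g k \<rho>" for k \<rho>
  define I where "I k = integral {s..r} (v k)" for k
  have vc: "continuous_on {s..r} (v k)" if "k \<in> {1..M}" for k
    unfolding v_def using gc[OF that] by (intro continuous_intros)
  have vi: "(v k has_integral I k) {s..r}" if "k \<in> {1..M}" for k
    unfolding I_def by (intro integrable_integral integrable_continuous_interval vc that)
  have ck: "c k r = exp (- lam k * (r - s)) * c k s + I k" if k: "k \<in> {1..M}" for k
  proof -
    have d: "((\<lambda>\<rho>. exp (- lam k * (r - \<rho>)) * c k \<rho>) has_vector_derivative v k \<rho>) (at \<rho> within {s..r})"
      if "\<rho> \<in> {s..r}" for \<rho>
      unfolding has_real_derivative_iff_has_vector_derivative[symmetric] v_def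
      by (rule derivative_eq_intros refl der[OF k that] | simp)+ (simp add: algebra_simps)
    have "(v k has_integral (exp (- lam k * (r - r)) * c k r - exp (- lam k * (r - s)) * c k s)) {s..r}"
      using sr by (intro fundamental_theorem_of_calculus d) auto
    with vi[OF k] have "I k = c k r - exp (- lam k * (r - s)) * c k s"
      by (simp add: has_integral_unique)
    then show ?thesis by simp
  qed
  define V where "V \<rho> = sqrt (\<Sum>k\<in>{1..M}. (v k \<rho>)^2)" for \<rho>
  have Vc: "continuous_on {s..r} V" unfolding V_def by (intro continuous_intros vc) auto
  have Vi: "(V has_integral integral {s..r} V) {s..r}" by (intro integrable_integral integrable_continuous_interval Vc)
  define N where "N = sqrt (\<Sum>k\<in>{1..M}. (I k)^2)"
  have N0: "N \<ge> 0" unfolding N_def by (simp add: sum_nonneg)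
  have IV: "N \<le> integral {s..r} V"
  proof -
    have "N^2 = (\<Sum>k\<in>{1..M}. I k * I k)" unfolding N_def by (simp add: sum_nonneg power2_eq_square)
    also have "((\<lambda>\<rho>. \<Sum>k\<in>{1..M}. I k * v k \<rho>) has_integral (\<Sum>k\<in>{1..M}. I k * I k)) {s..r}"
      by (intro has_integral_sum) (auto intro!: has_integral_mult_right vi)
    then have "(\<Sum>k\<in>{1..M}. I k * I k) \<le> integral {s..r} (\<lambda>\<rho>. N * V \<rho>)"
    proof (rule has_integral_le)
      show "((\<lambda>\<rho>. N * V \<rho>) has_integral integral {s..r} (\<lambda>\<rho>. N * V \<rho>)) {s..r}"
        by (intro integrable_integral integrable_continuous_interval continuous_intros Vc)
      fix \<rho>
      have "(\<Sum>k\<in>{1..M}. I k * v k \<rho>) \<le> (\<Sum>k\<in>{1..M}. \<bar>I k\<bar> * \<bar>v k \<rho>\<bar>)"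
        by (intro sum_mono) (rule mult_le_abs_abs)
      also have "\<dots> \<le> L2_set I {1..M} * L2_set (\<lambda>k. v k \<rho>) {1..M}" by (rule L2_set_mult_ineq)
      finally show "(\<Sum>k\<in>{1..M}. I k * v k \<rho>) \<le> N * V \<rho>" by (simp add: L2_set_def N_def V_def)
    qed
    also have "\<dots> = N * integral {s..r} V" by simp
    finally have "N * N \<le> N * integral {s..r} V" by (simp add: power2_eq_square)
    then show ?thesis
    proof (cases "N = 0")
      case True
      have "0 \<le> integral {s..r} V" by (rule integral_nonneg[OF integrable_continuous_interval[OF Vc]]) (simp add: V_def sum_nonneg)
      then show ?thesis using True by simp
    next
      case False then show ?thesis using \<open>N * N \<le> N * integral {s..r} V\<close> N0 by (simp add: mult_le_cancel_left)
    qed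
  qed
  have "sqrt (\<Sum>k\<in>{1..M}. (c k r)^2) = L2_set (\<lambda>k. exp (- lam k * (r - s)) * c k s + I k) {1..M}"
    unfolding L2_set_def by (intro arg_cong[where f = sqrt] sum.cong refl) (simp add: ck)
  also have "\<dots> \<le> L2_set (\<lambda>k. exp (- lam k * (r - s)) * c k s) {1..M} + L2_set I {1..M}"
    by (rule L2_set_triangle_ineq)
  also have "\<dots> \<le> sqrt (\<Sum>k\<in>{1..M}. (exp (- lam k * (r - s)) * c k s)^2) + integral {s..r} V"
    using IV by (simp add: L2_set_def N_def)
  finally show ?thesis by (simp add: V_def[abs_def] v_def)
qed


lemma gronwall:
  fixes f f' p :: "real \<Rightarrow> real"
  assumes ut: "u \<le> t"
    and der: "\<And>\<tau>. \<tau> \<in> {u..t} \<Longrightarrow> (f has_real_derivative f' \<tau>) (at \<tau> within {u..t})"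
    and le: "\<And>\<tau>. \<tau> \<in> {u..t} \<Longrightarrow> f' \<tau> \<le> p \<tau> * f \<tau>"
    and pc: "continuous_on {u..t} p"
  shows "f t \<le> f u * exp (integral {u..t} p)"
proof -
  define P where "P \<tau> = integral {u..\<tau>} p" for \<tau>
  have Pd: "(P has_real_derivative p \<tau>) (at \<tau> within {u..t})" if "\<tau> \<in> {u..t}" for \<tau>
    unfolding P_def has_real_derivative_iff_has_vector_derivative
    by (rule integral_has_vector_derivative[OF pc that])
  define g' where "g' \<tau> = (f' \<tau> - p \<tau> * f \<tau>) * exp (- P \<tau>)" for \<tau>
  have gd: "((\<lambda>\<tau>. f \<tau> * exp (- P \<tau>)) has_vector_derivative g' \<tau>) (at \<tau> within {u..t})" if "\<tau> \<in> {u..t}" for \<tau>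
    unfolding has_real_derivative_iff_has_vector_derivative[symmetric] g'_def
    by (rule derivative_eq_intros der[OF that] Pd[OF that] refl | simp)+ (simp add: algebra_simps)
  have "(g' has_integral (f t * exp (- P t) - f u * exp (- P u))) {u..t}"
    using ut by (intro fundamental_theorem_of_calculus gd)
  moreover have "((\<lambda>_. 0::real) has_integral 0) {u..t}" by simp
  ultimately have "f t * exp (- P t) - f u * exp (- P u) \<le> 0"
  proof (rule has_integral_le)
    fix \<tau> assume "\<tau> \<in> {u..t}"
    then show "g' \<tau> \<le> 0" using le unfolding g'_def by (simp add: mult_nonpos_nonneg)
  qed
  moreover have "P u = 0" by (simp add: P_def)
  ultimately have "f t * exp (- P t) \<le> f u" by simp
  then have "f t * exp (- P t) * exp (P t) \<le> f u * exp (P t)" by (intro mult_right_mono) auto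
  then show ?thesis by (simp add: P_def exp_minus field_simps)
qed


lemma powr_le_exp:
  fixes x \<alpha> :: real assumes "x > 0" "0 \<le> \<alpha>" "\<alpha> \<le> 1"
  shows "x powr \<alpha> \<le> exp x"
proof (cases "x \<le> 1")
  case True
  then have "x powr \<alpha> \<le> 1" using assms by (intro powr_le1) auto
  also have "1 \<le> exp x" using assms by simp
  finally show ?thesis .
next
  case False
  then have "x powr \<alpha> \<le> x powr 1" using assms by (intro powr_mono) auto
  also have "\<dots> = x" using assms by simp
  also have "x \<le> exp x" using exp_ge_add_one_self[of x] by linarith
  finally show ?thesis .
qed

lemma heat_smooth:
  assumes \<sigma>: "\<sigma> > 0" and \<alpha>: "0 \<le> \<alpha>" "\<alpha> \<le> 1"
  shows "sqrt (\<Sum>k\<in>{1..M}. (exp (- lam k * \<sigma>) * c k)^2)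
       \<le> \<sigma> powr (- \<alpha>) * sqrt (\<Sum>k\<in>{1..M}. ((pi * real k) powr (2 * - \<alpha>) * c k)^2)"
proof -
  have pt: "exp (- lam k * \<sigma>) \<le> \<sigma> powr (- \<alpha>) * (pi * real k) powr (2 * - \<alpha>)" if k: "k \<in> {1..M}" for k
  proof -
    have pk: "pi * real k > 0" using k by auto
    define x where "x = lam k * \<sigma>"
    have x: "x > 0" unfolding x_def lam_def using pk \<sigma> k by (intro mult_pos_pos) auto
    have m1: "(\<sigma> * (pi * real k) powr 2) powr (- \<alpha>) = \<sigma> powr (- \<alpha>) * ((pi * real k) powr 2) powr (- \<alpha>)"
      using \<sigma> pk by (intro powr_mult)
    have m2: "((pi * real k) powr 2) powr (- \<alpha>) = (pi * real k) powr (2 * - \<alpha>)" by (rule powr_powr)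
    have "\<sigma> powr (- \<alpha>) * (pi * real k) powr (2 * - \<alpha>) = (\<sigma> * (pi * real k) powr 2) powr (- \<alpha>)"
      unfolding m1 m2 ..
    also have "(pi * real k) powr 2 = lam k" using pk by (simp add: lam_def powr_numeral)
    also have "(\<sigma> * lam k) powr (- \<alpha>) = inverse (x powr \<alpha>)" by (simp add: x_def powr_minus mult.commute)
    finally have e: "\<sigma> powr (- \<alpha>) * (pi * real k) powr (2 * - \<alpha>) = inverse (x powr \<alpha>)" .
    have "x powr \<alpha> \<le> exp x" using x \<alpha> by (rule powr_le_exp)
    then have "inverse (exp x) \<le> inverse (x powr \<alpha>)" using x by (intro le_imp_inverse_le) auto
    then show ?thesis unfolding e by (simp add: x_def exp_minus)
  qed
  have "(\<Sum>k\<in>{1..M}. (exp (- lam k * \<sigma>) * c k)^2) \<le> (\<Sum>k\<in>{1..M}. (\<sigma> powr (- \<alpha>) * ((pi * real k) powr (2 * - \<alpha>) * c k))^2)"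
  proof (intro sum_mono)
    fix k assume k: "k \<in> {1..M}"
    have "(exp (- lam k * \<sigma>))^2 \<le> (\<sigma> powr (- \<alpha>) * (pi * real k) powr (2 * - \<alpha>))^2"
      using pt[OF k] by (intro power_mono) auto
    then have "(exp (- lam k * \<sigma>))^2 * (c k)^2 \<le> (\<sigma> powr (- \<alpha>) * (pi * real k) powr (2 * - \<alpha>))^2 * (c k)^2"
      by (intro mult_right_mono) auto
    then show "(exp (- lam k * \<sigma>) * c k)^2 \<le> (\<sigma> powr (- \<alpha>) * ((pi * real k) powr (2 * - \<alpha>) * c k))^2"
      by (simp add: power_mult_distrib mult.assoc)
  qed
  also have "\<dots> = (\<sigma> powr (- \<alpha>))^2 * (\<Sum>k\<in>{1..M}. ((pi * real k) powr (2 * - \<alpha>) * c k)^2)"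
    by (simp add: power_mult_distrib sum_distrib_left)
  finally have "sqrt (\<Sum>k\<in>{1..M}. (exp (- lam k * \<sigma>) * c k)^2) \<le> sqrt ((\<sigma> powr (- \<alpha>))^2 * (\<Sum>k\<in>{1..M}. ((pi * real k) powr (2 * - \<alpha>) * c k)^2))"
    by (rule real_sqrt_le_mono)
  also have "\<dots> = \<sigma> powr (- \<alpha>) * sqrt (\<Sum>k\<in>{1..M}. ((pi * real k) powr (2 * - \<alpha>) * c k)^2)"
    by (simp add: real_sqrt_mult)
  finally show ?thesis .
qed

definition Zd :: "real \<Rightarrow> real" where
  "Zd \<delta> = (\<Sum>k. (pi * real k) powr (-1 - 4 * \<delta>))"

lemma Zd_summable:
  assumes "\<delta> > 0" shows "summable (\<lambda>k. (pi * real k) powr (-1 - 4 * \<delta>))"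
proof -
  have "summable (\<lambda>k. real k powr (-1 - 4 * \<delta>))" using assms by (subst summable_real_powr_iff) auto
  then have "summable (\<lambda>k. pi powr (-1 - 4 * \<delta>) * real k powr (-1 - 4 * \<delta>))" by (rule summable_mult)
  then show ?thesis by (simp add: powr_mult)
qed

lemma Kbound:
  assumes \<delta>: "\<delta> > 0"
  shows "\<bar>sinsum M a y\<bar> \<le> sqrt 2 * sqrt (Zd \<delta>) * sqrt (\<Sum>k\<in>{1..M}. ((pi * real k) powr (2 * (1/4 + \<delta>)) * a k)^2)"
proof -
  define w where "w k = (pi * real k) powr (2 * (1/4 + \<delta>))" for k
  have w: "w k > 0" if "k \<in> {1..M}" for k using that by (simp add: w_def)
  have "\<bar>sinsum M a y\<bar> \<le> sqrt 2 * sqrt (\<Sum>k\<in>{1..M}. (w k)^2 * (a k)^2) * sqrt (\<Sum>k\<in>{1..M}. 1 / (w k)^2)"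
    by (rule sup_bound) (rule w)
  also have "(\<Sum>k\<in>{1..M}. 1 / (w k)^2) = (\<Sum>k\<in>{1..M}. (pi * real k) powr (-1 - 4 * \<delta>))"
  proof (intro sum.cong refl)
    fix k assume k: "k \<in> {1..M}"
    have pk: "pi * real k > 0" using k by auto
    have "(w k)^2 = (pi * real k) powr (1 + 4 * \<delta>)"
      unfolding w_def using pk by (simp add: powr_realpow'[symmetric] powr_powr power2_eq_square powr_add[symmetric] algebra_simps)
    then show "1 / (w k)^2 = (pi * real k) powr (-1 - 4 * \<delta>)"
      using pk by (simp add: powr_minus[symmetric] divide_inverse)
  qed
  also have "\<dots> \<le> Zd \<delta>" unfolding Zd_def by (intro sum_le_suminf Zd_summable \<delta>) auto
  finally have "\<bar>sinsum M a y\<bar> \<le> sqrt 2 * sqrt (\<Sum>k\<in>{1..M}. (w k)^2 * (a k)^2) * sqrt (Zd \<delta>)"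
    by (smt (verit, best) mult_left_mono real_sqrt_ge_zero real_sqrt_le_mono sum_nonneg zero_le_power2 mult_nonneg_nonneg)
  then show ?thesis by (simp add: w_def power_mult_distrib ac_simps)
qed

lemma deriv_cont:
  assumes "\<And>\<tau>. \<tau> \<in> S \<Longrightarrow> (f has_real_derivative f' \<tau>) (at \<tau> within S)"
  shows "continuous_on S f"
  unfolding continuous_on_eq_continuous_within using assms DERIV_continuous by blast


lemma energy_long:
  assumes \<epsilon>: "\<epsilon> > 0" and su: "s < u" and ut: "u \<le> t"
    and cder: "\<And>k \<tau>. k \<in> {1..M} \<Longrightarrow> \<tau> \<ge> s \<Longrightarrow> (c k has_real_derivative (- lam k * c k \<tau> + 2 * Bco M a c k \<tau>)) (at \<tau> within {s..})"
    and acont: "\<And>j. j \<in> {1..M} \<Longrightarrow> continuous_on {s..} (a j)"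
  shows "(\<Sum>k\<in>{1..M}. (c k t)^2) \<le> (\<Sum>k\<in>{1..M}. (c k u)^2) * exp (integral {u..t} (\<lambda>\<tau>. \<epsilon> * (\<Sum>k\<in>{1..M}. lam k * (a k \<tau>)^2) + 1 / \<epsilon>^2))"
proof (rule gronwall[OF ut])
  fix \<tau> assume \<tau>: "\<tau> \<in> {u..t}"
  have dk: "(c k has_real_derivative (- lam k * c k \<tau> + 2 * Bco M a c k \<tau>)) (at \<tau> within {u..t})" if "k \<in> {1..M}" for k
    using su \<tau> by (intro DERIV_subset[OF cder[OF that]]) auto
  show "((\<lambda>\<tau>. \<Sum>k\<in>{1..M}. (c k \<tau>)^2) has_real_derivative
      (\<Sum>k\<in>{1..M}. 2 * c k \<tau> * (- lam k * c k \<tau> + 2 * Bco M a c k \<tau>))) (at \<tau> within {u..t})"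
    by (rule DERIV_sum) (rule derivative_eq_intros dk refl | simp)+
  have "(\<Sum>k\<in>{1..M}. 2 * c k \<tau> * (- lam k * c k \<tau> + 2 * Bco M a c k \<tau>))
      = 2 * (\<Sum>k\<in>{1..M}. c k \<tau> * (- lam k * c k \<tau> + 2 * L2inner (Bnl (sinsum M (\<lambda>j. a j \<tau>)) (sinsum M (\<lambda>j. c j \<tau>))) (hb k)))"
    by (simp add: sum_distrib_left Bco_def mult.assoc)
  also have "\<dots> \<le> (\<epsilon> * (\<Sum>k\<in>{1..M}. lam k * (a k \<tau>)^2) + 1 / \<epsilon>^2) * (\<Sum>k\<in>{1..M}. (c k \<tau>)^2)"
    by (rule energy_rate[OF \<epsilon>])
  finally show "(\<Sum>k\<in>{1..M}. 2 * c k \<tau> * (- lam k * c k \<tau> + 2 * Bco M a c k \<tau>))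
      \<le> (\<epsilon> * (\<Sum>k\<in>{1..M}. lam k * (a k \<tau>)^2) + 1 / \<epsilon>^2) * (\<Sum>k\<in>{1..M}. (c k \<tau>)^2)" .
next
  have "continuous_on {u..t} (a j)" if "j \<in> {1..M}" for j
    using su by (intro continuous_on_subset[OF acont[OF that]]) auto
  then show "continuous_on {u..t} (\<lambda>\<tau>. \<epsilon> * (\<Sum>k\<in>{1..M}. lam k * (a k \<tau>)^2) + 1 / \<epsilon>^2)"
    by (intro continuous_intros) auto
qed


lemma short_bound:
  fixes a c :: "nat \<Rightarrow> real \<Rightarrow> real"
  assumes \<alpha>: "0 \<le> \<alpha>" "\<alpha> < 1" and \<tau>: "0 < \<tau>'" "\<tau>' \<le> t - s"
    and cder: "\<And>k \<tau>. k \<in> {1..M} \<Longrightarrow> \<tau> \<ge> s \<Longrightarrow> (c k has_real_derivative (- lam k * c k \<tau> + 2 * Bco M a c k \<tau>)) (at \<tau> within {s..})"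
    and acont: "\<And>j. j \<in> {1..M} \<Longrightarrow> continuous_on {s..} (a j)"
    and Kb: "Kb \<ge> 0" "\<And>\<rho> y. \<rho> \<in> {s..t} \<Longrightarrow> y \<in> {0..1} \<Longrightarrow> \<bar>sinsum M (\<lambda>j. a j \<rho>) y\<bar> \<le> Kb"
    and small: "2 * (1 / (1 - \<alpha>) + 2) * (sqrt 2 * Kb) * sqrt \<tau>' \<le> 1/2"
    and r: "s < r" "r \<le> s + \<tau>'"
  defines "H \<equiv> sqrt (\<Sum>k\<in>{1..M}. ((pi * real k) powr (2 * - \<alpha>) * c k s)^2)"
  shows "(r - s) powr \<alpha> * sqrt (\<Sum>k\<in>{1..M}. (c k r)^2) \<le> 2 * H"
proof -
  define nrm where "nrm \<rho> = sqrt (\<Sum>k\<in>{1..M}. (c k \<rho>)^2)" for \<rho>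
  have cc: "continuous_on {s..} (c k)" if "k \<in> {1..M}" for k
    by (rule deriv_cont[OF cder[OF that]]) auto
  have Bc: "continuous_on {s..} (Bco M a c k)" for k
    by (rule Bco_cont) (auto intro: cc acont)
  have nc: "continuous_on {s..t} nrm"
    unfolding nrm_def by (intro continuous_intros continuous_on_subset[OF cc]) auto
  have st: "s < t" using \<tau> by simp
  obtain rm where rm: "rm \<in> {s..t}" "\<And>y. y \<in> {s..t} \<Longrightarrow> nrm y \<le> nrm rm"
    using continuous_attains_sup[OF compact_Icc _ nc] st by auto
  define B where "B = nrm rm"
  have H0: "H \<ge> 0" unfolding H_def by (simp add: sum_nonneg)
  define \<Phi> where "\<Phi> = (\<lambda>r. (r - s) powr \<alpha> * nrm r) ` {s<..s+\<tau>'}"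
  have \<Phi>ne: "\<Phi> \<noteq> {}" using \<tau> by (auto simp: \<Phi>_def)
  have \<Phi>bdd: "bdd_above \<Phi>"
  proof (rule bdd_aboveI)
    fix x assume "x \<in> \<Phi>"
    then obtain r where r: "r \<in> {s<..s+\<tau>'}" and x: "x = (r - s) powr \<alpha> * nrm r" by (auto simp: \<Phi>_def)
    have "(r - s) powr \<alpha> \<le> \<tau>' powr \<alpha>" using r \<alpha> by (intro powr_mono2) auto
    moreover have "nrm r \<le> B" unfolding B_def using r \<tau> by (intro rm(2)) auto
    moreover have "nrm r \<ge> 0" by (simp add: nrm_def sum_nonneg)
    ultimately show "x \<le> \<tau>' powr \<alpha> * B" unfolding x by (intro mult_mono) auto
  qed
  define \<phi> where "\<phi> = Sup \<Phi>"
  have \<phi>up: "(r - s) powr \<alpha> * nrm r \<le> \<phi>" if "r \<in> {s<..s+\<tau>'}" for r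
    unfolding \<phi>_def using that by (intro cSup_upper \<Phi>bdd) (auto simp: \<Phi>_def)
  have \<phi>0: "\<phi> \<ge> 0"
  proof -
    have "0 \<le> (\<tau>') powr \<alpha> * nrm (s + \<tau>')" by (simp add: nrm_def sum_nonneg)
    also have "\<dots> \<le> \<phi>" using \<phi>up[of "s + \<tau>'"] \<tau> by simp
    finally show ?thesis .
  qed
  have key: "(r - s) powr \<alpha> * nrm r \<le> H + \<phi> / 2" if r: "r \<in> {s<..s+\<tau>'}" for r
  proof -
    have sr: "s < r" "r \<le> t" using r \<tau> by auto
    define Gr where "Gr \<rho> = sqrt (\<Sum>k\<in>{1..M}. (2 * exp (- lam k * (r - \<rho>)) * Bco M a c k \<rho>)^2)" for \<rho>
    have D: "nrm r \<le> sqrt (\<Sum>k\<in>{1..M}. (exp (- lam k * (r - s)) * c k s)^2) + integral {s..r} Gr"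
      unfolding nrm_def Gr_def
    proof (rule duhamel[OF sr(1)])
      fix k \<tau> assume "k \<in> {1..M}" "\<tau> \<in> {s..r}"
      then show "(c k has_real_derivative (- lam k * c k \<tau> + 2 * Bco M a c k \<tau>)) (at \<tau> within {s..r})"
        by (intro DERIV_subset[OF cder]) auto
    next
      fix k show "continuous_on {s..r} (Bco M a c k)" by (rule continuous_on_subset[OF Bc]) auto
    qed
    have heat: "sqrt (\<Sum>k\<in>{1..M}. (exp (- lam k * (r - s)) * c k s)^2) \<le> (r - s) powr (- \<alpha>) * H"
      unfolding H_def using sr \<alpha> by (intro heat_smooth) auto
    have Grc: "continuous_on {s..r} Gr"
      unfolding Gr_def by (intro continuous_intros continuous_on_subset[OF Bc]) auto
    have Gb: "Gr \<rho> \<le> (sqrt 2 * Kb * \<phi>) * (r - \<rho>) powr (-1/2) * (\<rho> - s) powr (- \<alpha>)" if \<rho>: "s < \<rho>" "\<rho> < r" for \<rho>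
    proof -
      have G1: "Gr \<rho> \<le> sqrt (2 / (r - \<rho>)) * Kb * nrm \<rho>"
        unfolding Gr_def nrm_def Bco_def
      proof (rule duhamel_kernel_bound)
        show "r - \<rho> > 0" using \<rho> by simp
        fix y :: real assume "y \<in> {0..1}"
        then show "\<bar>sinsum M (\<lambda>j. a j \<rho>) y\<bar> \<le> Kb" using \<rho> sr by (intro Kb(2)) auto
      qed
      have N1: "nrm \<rho> \<le> \<phi> * (\<rho> - s) powr (- \<alpha>)"
      proof -
        have "(\<rho> - s) powr \<alpha> * nrm \<rho> \<le> \<phi>" using \<rho> r by (intro \<phi>up) auto
        moreover have p: "(\<rho> - s) powr \<alpha> > 0" using \<rho> by simp
        ultimately have "nrm \<rho> \<le> \<phi> / (\<rho> - s) powr \<alpha>" by (simp add: pos_le_divide_eq mult.commute)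
        also have "\<phi> / (\<rho> - s) powr \<alpha> = \<phi> * (\<rho> - s) powr (- \<alpha>)" by (simp add: powr_minus divide_inverse)
        finally show ?thesis .
      qed
      have N2: "sqrt (2 / (r - \<rho>)) * Kb * nrm \<rho> \<le> sqrt (2 / (r - \<rho>)) * Kb * (\<phi> * (\<rho> - s) powr (- \<alpha>))"
        using N1 Kb(1) \<rho> by (intro mult_left_mono mult_nonneg_nonneg) auto
      have S2: "sqrt (2 / (r - \<rho>)) = sqrt 2 * (r - \<rho>) powr (-1/2)"
      proof -
        have "(r - \<rho>) powr (-1/2) = (r - \<rho>) powr (- (1/2))" by simp
        also have "\<dots> = inverse ((r - \<rho>) powr (1/2))" by (rule powr_minus)
        also have "(r - \<rho>) powr (1/2) = sqrt (r - \<rho>)" using \<rho> by (intro powr_half_sqrt) auto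
        finally have "(r - \<rho>) powr (-1/2) = inverse (sqrt (r - \<rho>))" .
        moreover have "sqrt (2 / (r - \<rho>)) = sqrt 2 * inverse (sqrt (r - \<rho>))"
          by (simp add: divide_inverse real_sqrt_mult real_sqrt_inverse)
        ultimately show ?thesis by simp
      qed
      have "Gr \<rho> \<le> sqrt (2 / (r - \<rho>)) * Kb * (\<phi> * (\<rho> - s) powr (- \<alpha>))" using G1 N2 by (rule order_trans)
      then have A: "Gr \<rho> \<le> sqrt 2 * (r - \<rho>) powr (-1/2) * Kb * (\<phi> * (\<rho> - s) powr (- \<alpha>))" unfolding S2 .
      have E: "sqrt 2 * (r - \<rho>) powr (-1/2) * Kb * (\<phi> * (\<rho> - s) powr (- \<alpha>)) = (sqrt 2 * Kb * \<phi>) * (r - \<rho>) powr (-1/2) * (\<rho> - s) powr (- \<alpha>)"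
        by (simp only: mult.assoc mult.commute mult.left_commute)
      show ?thesis using A E by (rule ord_le_eq_trans)
    qed
    have SI: "(r - s) powr \<alpha> * integral {s..r} Gr \<le> 2 * (1 / (1 - \<alpha>) + 2) * (sqrt 2 * Kb * \<phi>) * sqrt (r - s)"
      using \<phi>0 Kb(1) by (intro sing_int[OF sr(1) \<alpha> _ Grc Gb]) auto
    also have "\<dots> \<le> 2 * (1 / (1 - \<alpha>) + 2) * (sqrt 2 * Kb * \<phi>) * sqrt \<tau>'"
      using r \<alpha> \<phi>0 Kb(1) by (intro mult_left_mono) auto
    also have "\<dots> = (2 * (1 / (1 - \<alpha>) + 2) * (sqrt 2 * Kb) * sqrt \<tau>') * \<phi>" by (simp add: ac_simps)
    also have "\<dots> \<le> (1/2) * \<phi>" using small \<phi>0 by (intro mult_right_mono) auto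
    finally have SI': "(r - s) powr \<alpha> * integral {s..r} Gr \<le> \<phi> / 2" by simp
    have "(r - s) powr \<alpha> * nrm r \<le> (r - s) powr \<alpha> * ((r - s) powr (- \<alpha>) * H + integral {s..r} Gr)"
      using D heat by (intro mult_left_mono) auto
    also have "\<dots> = H + (r - s) powr \<alpha> * integral {s..r} Gr"
      using sr by (simp add: algebra_simps powr_minus)
    finally show ?thesis using SI' by simp
  qed
  have "\<phi> \<le> H + \<phi> / 2"
    unfolding \<phi>_def by (rule cSup_least[OF \<Phi>ne]) (use key in \<open>auto simp: \<Phi>_def \<phi>_def\<close>)
  then have "\<phi> \<le> 2 * H" by simp
  moreover have "(r - s) powr \<alpha> * nrm r \<le> \<phi>" using r by (intro \<phi>up) auto
  ultimately show ?thesis unfolding nrm_def by simp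
qed


definition c1 :: "real \<Rightarrow> real" where "c1 \<alpha> = 2 * (1 / (1 - \<alpha>) + 2) * sqrt 2"
definition cdl :: "real \<Rightarrow> real" where "cdl \<delta> = sqrt 2 * sqrt (Zd \<delta>)"
definition Cst :: "real \<Rightarrow> real \<Rightarrow> real \<Rightarrow> real \<Rightarrow> real" where
  "Cst \<alpha> \<delta> \<epsilon> T = 16 * (c1 \<alpha>)^2 * ((cdl \<delta>)^2 + 1) * exp (T / (2 * \<epsilon>^2)) * (max 1 T) powr \<alpha>"

lemma c1_ge: "0 \<le> \<alpha> \<Longrightarrow> \<alpha> < 1 \<Longrightarrow> c1 \<alpha> \<ge> 1"
proof -
  assume "0 \<le> \<alpha>" "\<alpha> < 1"
  then have "1 / (1 - \<alpha>) \<ge> 0" by simp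
  moreover have "sqrt 2 \<ge> 1" by simp
  ultimately have "2 * (1 / (1 - \<alpha>) + 2) * sqrt 2 \<ge> 2 * 2 * 1" by (intro mult_mono) auto
  then show ?thesis by (simp add: c1_def)
qed

lemma Zd_nonneg: "Zd \<delta> \<ge> 0" if "\<delta> > 0"
  unfolding Zd_def using that by (intro suminf_nonneg Zd_summable) auto

lemma Cst_ge2: "0 \<le> \<alpha> \<Longrightarrow> \<alpha> < 1 \<Longrightarrow> T \<ge> 0 \<Longrightarrow> Cst \<alpha> \<delta> \<epsilon> T \<ge> 2"
proof -
  assume a: "0 \<le> \<alpha>" "\<alpha> < 1" and T: "T \<ge> 0"
  have "(c1 \<alpha>)^2 \<ge> 1" using c1_ge[OF a] by (simp add: one_le_power)
  moreover have "(cdl \<delta>)^2 + 1 \<ge> 1" by simp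
  moreover have "exp (T / (2 * \<epsilon>^2)) \<ge> 1" using T by simp
  moreover have "(max 1 T) powr \<alpha> \<ge> 1" using a by (intro ge_one_powr_ge_zero) auto
  ultimately have "16 * (c1 \<alpha>)^2 * ((cdl \<delta>)^2 + 1) * exp (T / (2 * \<epsilon>^2)) * (max 1 T) powr \<alpha> \<ge> 16 * 1 * 1 * 1 * 1"
    by (intro mult_mono) auto
  then show ?thesis unfolding Cst_def by linarith
qed

lemma lin_aux:
  fixes x y z w v :: real
  assumes "x \<le> z" "y \<le> w" "2 * v = w" "0 \<le> z" shows "x + y \<le> 2 * (z + v)" using assms by (simp add: algebra_simps)

lemma det_main:
  fixes a c :: "nat \<Rightarrow> real \<Rightarrow> real"
  assumes \<alpha>: "0 \<le> \<alpha>" "\<alpha> < 1" and \<delta>: "\<delta> > 0" and \<epsilon>: "\<epsilon> > 0"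
    and st: "s < t" "t - s \<le> T"
    and cder: "\<And>k \<tau>. k \<in> {1..M} \<Longrightarrow> \<tau> \<ge> s \<Longrightarrow> (c k has_real_derivative (- lam k * c k \<tau> + 2 * Bco M a c k \<tau>)) (at \<tau> within {s..})"
    and acont: "\<And>j. j \<in> {1..M} \<Longrightarrow> continuous_on {s..} (a j)"
    and Hpos: "sqrt (\<Sum>k\<in>{1..M}. ((pi * real k) powr (2 * - \<alpha>) * c k s)^2) > 0"
  shows "sqrt (\<Sum>k\<in>{1..M}. (c k t)^2) / sqrt (\<Sum>k\<in>{1..M}. ((pi * real k) powr (2 * - \<alpha>) * c k s)^2)
     \<le> Cst \<alpha> \<delta> \<epsilon> T / (t - s) powr \<alpha> * exp (\<epsilon> * integral {s..t} (\<lambda>r. \<Sum>k\<in>{1..M}. lam k * (a k r)^2))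
        * ((SUP r\<in>{s..t}. \<Sum>k\<in>{1..M}. ((pi * real k) powr (2 * (1/4 + \<delta>)) * a k r)^2) + 1)"
proof -
  define H where "H = sqrt (\<Sum>k\<in>{1..M}. ((pi * real k) powr (2 * - \<alpha>) * c k s)^2)"
  define nrm where "nrm \<rho> = sqrt (\<Sum>k\<in>{1..M}. (c k \<rho>)^2)" for \<rho>
  define F where "F r = (\<Sum>k\<in>{1..M}. ((pi * real k) powr (2 * (1/4 + \<delta>)) * a k r)^2)" for r
  define S where "S = (SUP r\<in>{s..t}. F r)"
  define A where "A r = (\<Sum>k\<in>{1..M}. lam k * (a k r)^2)" for r
  define IA where "IA = integral {s..t} A"
  define C where "C = Cst \<alpha> \<delta> \<epsilon> T"
  have T: "T > 0" using st by simp
  have H0: "H > 0" using Hpos by (simp add: H_def)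
  have Fc: "continuous_on {s..t} F"
    unfolding F_def by (intro continuous_intros continuous_on_subset[OF acont]) auto
  have Fbdd: "bdd_above (F ` {s..t})"
    by (intro bounded_imp_bdd_above compact_imp_bounded compact_continuous_image Fc) auto
  have FS: "F r \<le> S" if "r \<in> {s..t}" for r
    unfolding S_def using that Fbdd by (intro cSUP_upper) auto
  have F0: "F r \<ge> 0" for r unfolding F_def by (simp add: sum_nonneg)
  have S0: "S \<ge> 0" using FS[of s] F0[of s] st by simp
  have Ac: "continuous_on {s..t} A"
    unfolding A_def by (intro continuous_intros continuous_on_subset[OF acont]) auto
  have A0: "A r \<ge> 0" for r unfolding A_def by (intro sum_nonneg) (auto simp: lam_def)
  have IA0: "IA \<ge> 0" unfolding IA_def by (rule integral_nonneg[OF integrable_continuous_interval[OF Ac]]) (simp add: A0)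
  define Kb where "Kb = cdl \<delta> * sqrt S"
  have cd0: "cdl \<delta> \<ge> 0" using Zd_nonneg[OF \<delta>] by (simp add: cdl_def)
  have Kb0: "Kb \<ge> 0" using cd0 S0 by (simp add: Kb_def)
  have Kb: "\<bar>sinsum M (\<lambda>j. a j \<rho>) y\<bar> \<le> Kb" if "\<rho> \<in> {s..t}" for \<rho> y
  proof -
    have "\<bar>sinsum M (\<lambda>j. a j \<rho>) y\<bar> \<le> cdl \<delta> * sqrt (F \<rho>)"
      using Kbound[OF \<delta>, of M "\<lambda>j. a j \<rho>" y] by (simp add: cdl_def F_def)
    also have "\<dots> \<le> Kb" unfolding Kb_def using FS[OF that] cd0 by (intro mult_left_mono) auto
    finally show ?thesis .
  qed
  have c1: "c1 \<alpha> \<ge> 1" by (rule c1_ge[OF \<alpha>])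
  define \<tau>0 where "\<tau>0 = 1 / (4 * (c1 \<alpha>)^2 * (Kb + 1)^2)"
  have \<tau>0: "\<tau>0 > 0" using c1 Kb0 by (simp add: \<tau>0_def)
  have sq\<tau>0: "sqrt \<tau>0 = 1 / (2 * c1 \<alpha> * (Kb + 1))"
    using c1 Kb0 by (simp add: \<tau>0_def real_sqrt_divide real_sqrt_mult)
  have small_gen: "2 * (1 / (1 - \<alpha>) + 2) * (sqrt 2 * Kb) * sqrt \<tau>' \<le> 1/2" if "0 < \<tau>'" "\<tau>' \<le> \<tau>0" for \<tau>'
  proof -
    have "2 * (1 / (1 - \<alpha>) + 2) * (sqrt 2 * Kb) * sqrt \<tau>' = c1 \<alpha> * Kb * sqrt \<tau>'" by (simp add: c1_def ac_simps)
    also have "\<dots> \<le> c1 \<alpha> * Kb * sqrt \<tau>0" using that c1 Kb0 by (intro mult_left_mono) auto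
    also have "\<dots> = Kb / (2 * (Kb + 1))"
    proof -
      have "c1 \<alpha> \<noteq> 0" "Kb + 1 \<noteq> 0" using c1 Kb0 by auto
      then show ?thesis unfolding sq\<tau>0 by (simp add: divide_simps)
    qed
    also have "\<dots> \<le> 1/2" using Kb0 by (simp add: field_simps)
    finally show ?thesis .
  qed
  have Kb': "\<And>\<rho> y. \<rho> \<in> {s..t} \<Longrightarrow> y \<in> {0..1} \<Longrightarrow> \<bar>sinsum M (\<lambda>j. a j \<rho>) y\<bar> \<le> Kb" using Kb by blast
  have expIA: "exp (\<epsilon> * IA) \<ge> 1" using \<epsilon> IA0 by simp
  have C2: "C \<ge> 2" unfolding C_def using Cst_ge2[OF \<alpha>, of T] T by simp
  have tsa: "(t - s) powr \<alpha> > 0" using st by simp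
  have main: "nrm t \<le> H * (C / (t - s) powr \<alpha> * exp (\<epsilon> * IA) * (S + 1))"
  proof (cases "t - s \<le> \<tau>0")
    case True
    have "(t - s) powr \<alpha> * nrm t \<le> 2 * H"
      unfolding nrm_def H_def
      by (rule short_bound[OF \<alpha> _ order_refl cder acont Kb0 Kb' small_gen]) (use st True in auto)
    then have "nrm t \<le> 2 * H / (t - s) powr \<alpha>" using tsa by (simp add: pos_le_divide_eq mult.commute)
    also have "\<dots> \<le> H * (C / (t - s) powr \<alpha> * exp (\<epsilon> * IA) * (S + 1))"
    proof -
      have "2 \<le> C * exp (\<epsilon> * IA) * (S + 1)"
      proof -
        have "2 * 1 * 1 \<le> C * exp (\<epsilon> * IA) * (S + 1)" using C2 expIA S0 by (intro mult_mono) auto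
        then show ?thesis by simp
      qed
      then have "2 * H \<le> H * (C * exp (\<epsilon> * IA) * (S + 1))" using H0 by (simp add: mult.commute)
      then show ?thesis using tsa by (simp add: divide_right_mono field_simps)
    qed
    finally show ?thesis .
  next
    case False
    define u where "u = s + \<tau>0"
    have su: "s < u" "u \<le> t" using \<tau>0 False by (auto simp: u_def)
    have "(u - s) powr \<alpha> * nrm u \<le> 2 * H"
      unfolding nrm_def H_def
      by (rule short_bound[OF \<alpha> \<tau>0 _ cder acont Kb0 Kb' small_gen]) (use False \<tau>0 in \<open>auto simp: u_def\<close>)
    then have Nu: "\<tau>0 powr \<alpha> * nrm u \<le> 2 * H" by (simp add: u_def)
    have "(nrm t)^2 \<le> (nrm u)^2 * exp (integral {u..t} (\<lambda>\<tau>. \<epsilon> * A \<tau> + 1 / \<epsilon>^2))"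
      unfolding nrm_def A_def using energy_long[OF \<epsilon> su cder acont] by (simp add: sum_nonneg)
    also have "integral {u..t} (\<lambda>\<tau>. \<epsilon> * A \<tau> + 1 / \<epsilon>^2) = \<epsilon> * integral {u..t} A + (t - u) / \<epsilon>^2"
    proof -
      have "integral {u..t} (\<lambda>\<tau>. \<epsilon> * A \<tau> + 1 / \<epsilon>^2) = integral {u..t} (\<lambda>\<tau>. \<epsilon> * A \<tau>) + integral {u..t} (\<lambda>\<tau>. 1 / \<epsilon>^2)"
        using su by (intro integral_add integrable_continuous_interval continuous_intros continuous_on_subset[OF Ac]) auto
      then show ?thesis using su by simp
    qed
    also have "\<epsilon> * integral {u..t} A + (t - u) / \<epsilon>^2 \<le> 2 * (\<epsilon> * IA + T / (2 * \<epsilon>^2))"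
    proof -
      have "integral {u..t} A \<le> IA"
        unfolding IA_def using su st by (intro integral_subset_le integrable_continuous_interval continuous_on_subset[OF Ac]) (auto simp: A0)
      then have "\<epsilon> * integral {u..t} A \<le> \<epsilon> * IA" using \<epsilon> by simp
      moreover have "(t - u) / \<epsilon>^2 \<le> T / \<epsilon>^2" using su st \<epsilon> by (intro divide_right_mono) auto
      moreover have "2 * (T / (2 * \<epsilon>^2)) = T / \<epsilon>^2" by simp
      moreover have "\<epsilon> * IA \<ge> 0" using \<epsilon> IA0 by simp
      ultimately show ?thesis by (rule lin_aux)
    qed
    finally have "(nrm t)^2 \<le> (nrm u)^2 * exp (2 * (\<epsilon> * IA + T / (2 * \<epsilon>^2)))"
      by (smt (verit) exp_le_cancel_iff mult_left_mono zero_le_power2)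
    also have "\<dots> = (nrm u * exp (\<epsilon> * IA + T / (2 * \<epsilon>^2)))^2"
      by (simp add: power_mult_distrib exp_double[symmetric] power2_eq_square exp_add[symmetric])
    finally have Nt2: "(nrm t)^2 \<le> (nrm u * exp (\<epsilon> * IA + T / (2 * \<epsilon>^2)))^2" .
    have Nt: "nrm t \<le> nrm u * exp (\<epsilon> * IA + T / (2 * \<epsilon>^2))"
      by (rule power2_le_imp_le[OF Nt2]) (simp add: nrm_def sum_nonneg)
    have "\<tau>0 powr (- \<alpha>) = (4 * (c1 \<alpha>)^2 * (Kb + 1)^2) powr \<alpha>"
      using c1 Kb0 by (simp add: \<tau>0_def powr_minus powr_divide)
    also have "\<dots> \<le> (4 * (c1 \<alpha>)^2 * (Kb + 1)^2) powr 1"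
    proof (rule powr_mono)
      show "\<alpha> \<le> 1" using \<alpha> by simp
      have "1 * 1 * 1 \<le> 4 * (c1 \<alpha>)^2 * (Kb + 1)^2" using c1 Kb0 by (intro mult_mono) (auto simp: one_le_power)
      then show "1 \<le> 4 * (c1 \<alpha>)^2 * (Kb + 1)^2" by simp
    qed
    also have "\<dots> = 4 * (c1 \<alpha>)^2 * (Kb + 1)^2" using c1 by simp
    also have "\<dots> \<le> 4 * (c1 \<alpha>)^2 * (2 * ((cdl \<delta>)^2 + 1) * (S + 1))"
    proof (intro mult_left_mono)
      have "(Kb + 1)^2 \<le> 2 * (Kb^2 + 1)" using sum_squares_bound[of Kb 1] by (simp add: power2_eq_square algebra_simps)
      also have "Kb^2 = (cdl \<delta>)^2 * S" using S0 by (simp add: Kb_def power_mult_distrib)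
      also have "2 * ((cdl \<delta>)^2 * S + 1) \<le> 2 * ((cdl \<delta>)^2 + 1) * (S + 1)"
        using S0 by (simp add: algebra_simps)
      finally show "(Kb + 1)^2 \<le> 2 * ((cdl \<delta>)^2 + 1) * (S + 1)" .
    qed simp
    finally have "\<tau>0 powr (- \<alpha>) \<le> 4 * (c1 \<alpha>)^2 * (2 * ((cdl \<delta>)^2 + 1) * (S + 1))" .
    then have tp: "\<tau>0 powr (- \<alpha>) \<le> 8 * (c1 \<alpha>)^2 * ((cdl \<delta>)^2 + 1) * (S + 1)" by (simp add: algebra_simps)
    have "nrm u \<le> 2 * H * \<tau>0 powr (- \<alpha>)"
    proof -
      have "\<tau>0 powr \<alpha> > 0" using \<tau>0 by simp
      then have "nrm u \<le> 2 * H / \<tau>0 powr \<alpha>" using Nu by (simp add: pos_le_divide_eq mult.commute)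
      then show ?thesis by (simp add: powr_minus divide_inverse)
    qed
    also have "\<dots> \<le> 2 * H * (8 * (c1 \<alpha>)^2 * ((cdl \<delta>)^2 + 1) * (S + 1))" using tp H0 by (intro mult_left_mono) auto
    finally have Nu': "nrm u \<le> 16 * (c1 \<alpha>)^2 * ((cdl \<delta>)^2 + 1) * (S + 1) * H" by (simp add: ac_simps)
    have one: "1 \<le> (max 1 T) powr \<alpha> / (t - s) powr \<alpha>"
    proof -
      have "(t - s) powr \<alpha> \<le> (max 1 T) powr \<alpha>" using st \<alpha> by (intro powr_mono2) auto
      then show ?thesis using tsa by simp
    qed
    have "nrm t \<le> 16 * (c1 \<alpha>)^2 * ((cdl \<delta>)^2 + 1) * (S + 1) * H * exp (\<epsilon> * IA + T / (2 * \<epsilon>^2))"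
      using Nt Nu' by (meson exp_gt_zero less_eq_real_def mult_right_mono order_trans)
    also have "\<dots> = H * (16 * (c1 \<alpha>)^2 * ((cdl \<delta>)^2 + 1) * exp (T / (2 * \<epsilon>^2)) * exp (\<epsilon> * IA) * (S + 1))"
      by (simp add: exp_add ac_simps)
    also have "\<dots> \<le> H * (16 * (c1 \<alpha>)^2 * ((cdl \<delta>)^2 + 1) * exp (T / (2 * \<epsilon>^2)) * exp (\<epsilon> * IA) * (S + 1)) * ((max 1 T) powr \<alpha> / (t - s) powr \<alpha>)"
    proof -
      have "0 \<le> H * (16 * (c1 \<alpha>)^2 * ((cdl \<delta>)^2 + 1) * exp (T / (2 * \<epsilon>^2)) * exp (\<epsilon> * IA) * (S + 1))"
        using H0 S0 by (intro mult_nonneg_nonneg) auto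
      from mult_left_mono[OF one this] show ?thesis by simp
    qed
    also have "\<dots> = H * (C / (t - s) powr \<alpha> * exp (\<epsilon> * IA) * (S + 1))"
      by (simp add: C_def Cst_def)
    finally show ?thesis .
  qed
  have "nrm t / H \<le> C / (t - s) powr \<alpha> * exp (\<epsilon> * IA) * (S + 1)"
    using main H0 by (simp add: pos_divide_le_eq mult.commute)
  then show ?thesis unfolding nrm_def H_def C_def IA_def A_def S_def F_def .
qed


lemma sinsum_zero_coef:
  assumes "sinsum M b \<noteq> (\<lambda>_. 0)"
  shows "\<exists>j\<in>{1..M}. b j \<noteq> 0"
proof (rule ccontr)
  assume "\<not> ?thesis"
  then have "sinsum M b = (\<lambda>_. 0)" by (auto simp: sinsum_def fun_eq_iff)
  with assms show False by simp
qed

theorem lemma4p3: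
  fixes P :: "'w measure"
    and W :: "nat \<Rightarrow> real \<Rightarrow> 'w \<Rightarrow> real"
    and e :: "nat \<Rightarrow> real \<Rightarrow> real" and q :: "nat \<Rightarrow> real"
    and X :: "nat \<Rightarrow> (real \<Rightarrow> real) \<Rightarrow> real \<Rightarrow> 'w \<Rightarrow> (real \<Rightarrow> real)"
    and T \<alpha> \<delta> \<epsilon> :: real
  assumes T: "0 < T"
    and BMs: "indep_std_BMs P W"
    and Q: "trace_class_eigen e q"
    and Xsol: "\<And>M x. x \<in> HM M \<Longrightarrow> AE \<omega> in P. galerkin_solution M e q W x (X M x) \<omega>"
    and \<alpha>: "0 \<le> \<alpha>" "\<alpha> < 1"
    and \<delta>: "0 < \<delta>" and \<epsilon>: "0 < \<epsilon>"
  shows "\<exists>C>0. \<forall>M x h s t. x \<in> HM M \<and> h \<in> HM M \<and> h \<noteq> (\<lambda>_. 0) \<and> 0 \<le> s \<and> s < t \<and> t \<le> T \<longrightarrow>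
     (AE \<omega> in P. \<forall>\<eta>. linearized_solution M (\<lambda>r. X M x r \<omega>) s h \<eta> \<longrightarrow>
        L2norm (\<eta> t) / L2norm (fracA (- \<alpha>) h)
        \<le> C / (t - s) powr \<alpha>
          * exp (\<epsilon> * integral {s..t} (\<lambda>r. (L2norm (grad (X M x r \<omega>)))^2))
          * ((SUP r\<in>{s..t}. (L2norm (fracA (1/4 + \<delta>) (X M x r \<omega>)))^2) + 1))"
proof (intro exI[of _ "Cst \<alpha> \<delta> \<epsilon> T"] conjI allI impI)
  have "Cst \<alpha> \<delta> \<epsilon> T \<ge> 2" using T by (intro Cst_ge2[OF \<alpha>]) auto
  then show "Cst \<alpha> \<delta> \<epsilon> T > 0" by simp
  fix M x h s t
  assume H: "x \<in> HM M \<and> h \<in> HM M \<and> h \<noteq> (\<lambda>_. 0) \<and> 0 \<le> s \<and> s < t \<and> t \<le> T"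
  then have x: "x \<in> HM M" and hH: "h \<in> HM M" and h0: "h \<noteq> (\<lambda>_. 0)" and s0: "0 \<le> s" and st: "s < t" "t \<le> T"
    by auto
  show "AE \<omega> in P. \<forall>\<eta>. linearized_solution M (\<lambda>r. X M x r \<omega>) s h \<eta> \<longrightarrow>
        L2norm (\<eta> t) / L2norm (fracA (- \<alpha>) h)
        \<le> Cst \<alpha> \<delta> \<epsilon> T / (t - s) powr \<alpha>
          * exp (\<epsilon> * integral {s..t} (\<lambda>r. (L2norm (grad (X M x r \<omega>)))^2))
          * ((SUP r\<in>{s..t}. (L2norm (fracA (1/4 + \<delta>) (X M x r \<omega>)))^2) + 1)"
    using Xsol[OF x]
  proof (rule AE_mp, intro AE_I2 impI allI)
    fix \<omega> \<eta>
    assume G: "galerkin_solution M e q W x (X M x) \<omega>"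
      and LS: "linearized_solution M (\<lambda>r. X M x r \<omega>) s h \<eta>"
    define Xp where "Xp = (\<lambda>r. X M x r \<omega>)"
    define a where "a j r = L2inner (Xp r) (hb j)" for j r
    define c where "c j \<tau> = L2inner (\<eta> \<tau>) (hb j)" for j \<tau>
    have XHM: "HM_path_cont M {0..} Xp" using G by (simp add: galerkin_solution_def Xp_def)
    have Xrep: "Xp r = sinsum M (\<lambda>j. a j r)" if "r \<ge> 0" for r
      using XHM that unfolding a_def HM_path_cont_def by (intro HM_repr) auto
    have ehm: "HM_path_cont M {s..} \<eta>" and es: "\<eta> s = h"
      and eder: "\<And>\<tau> k. \<tau> \<ge> s \<Longrightarrow> k \<in> {1..M} \<Longrightarrow> ((\<lambda>\<tau>. L2inner (\<eta> \<tau>) (hb k)) has_real_derivative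
           L2inner (\<lambda>y. Adir (\<eta> \<tau>) y + 2 * BM M (Xp \<tau>) (\<eta> \<tau>) y) (hb k)) (at \<tau> within {s..})"
      using LS unfolding linearized_solution_def Xp_def by auto
    have erep: "\<eta> \<tau> = sinsum M (\<lambda>j. c j \<tau>)" if "\<tau> \<ge> s" for \<tau>
      using ehm that unfolding c_def HM_path_cont_def by (intro HM_repr) auto
    have acont: "continuous_on {s..} (a j)" if "j \<in> {1..M}" for j
      using XHM that s0 unfolding HM_path_cont_def a_def by (auto intro: continuous_on_subset)
    have cder: "(c k has_real_derivative (- lam k * c k \<tau> + 2 * Bco M a c k \<tau>)) (at \<tau> within {s..})"
      if k: "k \<in> {1..M}" and \<tau>: "\<tau> \<ge> s" for k \<tau>
    proof -
      have X\<tau>: "Xp \<tau> = sinsum M (\<lambda>j. a j \<tau>)" using \<tau> s0 by (intro Xrep) auto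
      have "(\<lambda>y. Adir (\<eta> \<tau>) y + 2 * BM M (Xp \<tau>) (\<eta> \<tau>) y) = sinsum M (\<lambda>k. - lam k * c k \<tau> + 2 * Bco M a c k \<tau>)"
        unfolding erep[OF \<tau>] X\<tau> Adir_sinsum BM_def PM_sinsum
        by (simp add: PM_eq Bco_def sinsum_add)
      then have "L2inner (\<lambda>y. Adir (\<eta> \<tau>) y + 2 * BM M (Xp \<tau>) (\<eta> \<tau>) y) (hb k) = - lam k * c k \<tau> + 2 * Bco M a c k \<tau>"
        using k by simp
      moreover have "c k = (\<lambda>\<tau>. L2inner (\<eta> \<tau>) (hb k))" by (simp add: c_def fun_eq_iff)
      ultimately show ?thesis using eder[OF \<tau> k] by simp
    qed
    have hrep: "h = sinsum M (\<lambda>j. c j s)" using erep[of s] es by simp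
    obtain j where j: "j \<in> {1..M}" "c j s \<noteq> 0" using sinsum_zero_coef[of M "\<lambda>j. c j s"] h0 hrep by auto
    have Hpos: "sqrt (\<Sum>k\<in>{1..M}. ((pi * real k) powr (2 * - \<alpha>) * c k s)^2) > 0"
    proof -
      have "0 < ((pi * real j) powr (2 * - \<alpha>) * c j s)^2" using j by simp
      also have "\<dots> \<le> (\<Sum>k\<in>{1..M}. ((pi * real k) powr (2 * - \<alpha>) * c k s)^2)"
        using j by (intro member_le_sum) auto
      finally show ?thesis by simp
    qed
    have D: "sqrt (\<Sum>k\<in>{1..M}. (c k t)^2) / sqrt (\<Sum>k\<in>{1..M}. ((pi * real k) powr (2 * - \<alpha>) * c k s)^2)
     \<le> Cst \<alpha> \<delta> \<epsilon> T / (t - s) powr \<alpha> * exp (\<epsilon> * integral {s..t} (\<lambda>r. \<Sum>k\<in>{1..M}. lam k * (a k r)^2))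
        * ((SUP r\<in>{s..t}. \<Sum>k\<in>{1..M}. ((pi * real k) powr (2 * (1/4 + \<delta>)) * a k r)^2) + 1)"
      using st s0 by (intro det_main[OF \<alpha> \<delta> \<epsilon>] cder acont Hpos) auto
    have e1: "L2norm (\<eta> t) = sqrt (\<Sum>k\<in>{1..M}. (c k t)^2)"
      using st by (simp add: erep L2norm_sinsum)
    have e2: "L2norm (fracA (- \<alpha>) h) = sqrt (\<Sum>k\<in>{1..M}. ((pi * real k) powr (2 * - \<alpha>) * c k s)^2)"
      unfolding hrep fracA_sinsum L2norm_sinsum ..
    have e3: "integral {s..t} (\<lambda>r. (L2norm (grad (X M x r \<omega>)))^2) = integral {s..t} (\<lambda>r. \<Sum>k\<in>{1..M}. lam k * (a k r)^2)"
    proof (rule integral_cong)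
      fix r assume "r \<in> {s..t}"
      then have "X M x r \<omega> = sinsum M (\<lambda>j. a j r)" using s0 Xrep[of r] by (simp add: Xp_def)
      then show "(L2norm (grad (X M x r \<omega>)))^2 = (\<Sum>k\<in>{1..M}. lam k * (a k r)^2)" by (simp add: L2norm_grad_sq)
    qed
    have e4: "(SUP r\<in>{s..t}. (L2norm (fracA (1/4 + \<delta>) (X M x r \<omega>)))^2) = (SUP r\<in>{s..t}. \<Sum>k\<in>{1..M}. ((pi * real k) powr (2 * (1/4 + \<delta>)) * a k r)^2)"
    proof (rule SUP_cong[OF refl])
      fix r assume "r \<in> {s..t}"
      then have "X M x r \<omega> = sinsum M (\<lambda>j. a j r)" using s0 Xrep[of r] by (simp add: Xp_def)
      then show "(L2norm (fracA (1/4 + \<delta>) (X M x r \<omega>)))^2 = (\<Sum>k\<in>{1..M}. ((pi * real k) powr (2 * (1/4 + \<delta>)) * a k r)^2)"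
        by (simp add: fracA_sinsum L2norm_sq)
    qed
    show "L2norm (\<eta> t) / L2norm (fracA (- \<alpha>) h)
        \<le> Cst \<alpha> \<delta> \<epsilon> T / (t - s) powr \<alpha>
          * exp (\<epsilon> * integral {s..t} (\<lambda>r. (L2norm (grad (X M x r \<omega>)))^2))
          * ((SUP r\<in>{s..t}. (L2norm (fracA (1/4 + \<delta>) (X M x r \<omega>)))^2) + 1)"
      unfolding e1 e2 e3 e4 by (rule D)
  qed
qed


end
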